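(* Let $X$ be as in the context. Let $0<s_0,s_1<\infty$, $0<p_0,q_0,p_1,q_1\le\infty$ and $0<\theta<1$. Define $s,p,q$ by \[ \frac1p = \frac{1-\theta}{p_0}+\frac{\theta}{p_1},\quad \frac1q=\frac{1-\theta}{q_0}+\frac{\theta}{q_1},\quad s=(1-\theta)s_0+\theta s_1. \] Then $\big(\mathcal I^{s_0}_{p_0,q_0}(X)\big)^{1-\theta}\big(\mathcal I^{s_1}_{p_1,q_1}(X)\big)^{\theta} = \mathcal I^s_{p,q}(X)$ with equivalent quasi-norms.
   Context: $(Z,d,\mu)$ is a metric measure space, $\mu$ Borel regular, every ball has positive finite measure, and $\mu$ is doubling ($\mu(B(\xi,2r))\le c\,\mu(B(\xi,r))$). Hyperbolic filling: for each $n\in\mathbb Z$ let $(\xi_x)_{x\in X_n}$ be a maximal set of points of $Z$ with pairwise distances at least $2^{-n-1}$; $X=\bigsqcup_n X_n$, $|x|:=n$ for $x\in X_n$, $B(x):=B(\xi_x,2^{-n})$. For $0<s<\infty$, $0<p,q\le\infty$, $\mathcal I^s_{p,q}(X)$ is the space of $u:X\to\mathbb C$ with $\|u\|_{\mathcal I^s_{p,q}(X)} := \big(\sum_{k\in\mathbb Z}2^{ksq}\|\sum_{x\in X_k}|u(x)|\chi_{B(x)}\|_{L^p(Z)}^q\big)^{1/q}<\infty$ (usual modification for $p$ or $q=\infty$). Calderón product: for quasi-Banach lattices $X_0,X_1$ of functions on a measure space $M$ and $0<\theta<1$, $X_0^{1-\theta}X_1^\theta$ is the space of measurable $f$ on $M$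 with $\|f\|_{X_0^{1-\theta}X_1^\theta}:=\inf\{\lambda>0: |f|\le\lambda|g|^{1-\theta}|h|^\theta \text{ a.e. for some } \|g\|_{X_0}\le1,\ \|h\|_{X_1}\le1\}<\infty$. Here $M=X$ with counting measure. *)

theory Defs
  imports "HOL-Analysis.Analysis"
begin

(* real power of an extended nonnegative real; exponent r > 0 intended *)
definition epow :: "ennreal \<Rightarrow> real \<Rightarrow> ennreal" where
  "epow x r = (if x = \<infinity> then \<infinity> else ennreal (enn2real x powr r))"

definition ess_sup_enn :: "'a measure \<Rightarrow> ('a \<Rightarrow> ennreal) \<Rightarrow> ennreal" where
  "ess_sup_enn M f = Inf {C. AE x in M. f x \<le> C}"

definition Lp_qnorm :: "'a measure \<Rightarrow> ennreal \<Rightarrow> ('a \<Rightarrow> ennreal) \<Rightarrow> ennreal" where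
  "Lp_qnorm M p f =
     (if p = \<infinity> then ess_sup_enn M f
      else epow (\<integral>\<^sup>+ z. epow (f z) (enn2real p) \<partial>M) (1 / enn2real p))"

definition lq_qnorm :: "ennreal \<Rightarrow> (int \<Rightarrow> ennreal) \<Rightarrow> ennreal" where
  "lq_qnorm q a =
     (if q = \<infinity> then (SUP k. a k)
      else epow (\<integral>\<^sup>+ k. epow (a k) (enn2real q) \<partial>count_space UNIV) (1 / enn2real q))"

(* the hyperbolic filling: Xs n is the set of centres at level n;
   X is the disjoint union, a vertex x is a pair (n, \<xi>_x) with |x| = n *)
definition hf_vertices :: "(int \<Rightarrow> 'a set) \<Rightarrow> (int \<times> 'a) set" where
  "hf_vertices Xs = {(n, \<xi>). \<xi> \<in> Xs n}"

definition hf_ball :: "int \<times> 'a::metric_space \<Rightarrow> 'a set" where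
  "hf_ball x = ball (snd x) (2 powr (- real_of_int (fst x)))"

(* functions u : X \<rightarrow> \<complex>, represented as functions vanishing off X *)
definition hf_funs :: "(int \<Rightarrow> 'a set) \<Rightarrow> (int \<times> 'a \<Rightarrow> complex) set" where
  "hf_funs Xs = {u. \<forall>x. x \<notin> hf_vertices Xs \<longrightarrow> u x = 0}"

definition maximal_separated :: "real \<Rightarrow> 'a::metric_space set \<Rightarrow> bool" where
  "maximal_separated r S \<longleftrightarrow>
     (\<forall>a\<in>S. \<forall>b\<in>S. a \<noteq> b \<longrightarrow> dist a b \<ge> r) \<and>
     (\<forall>z. z \<notin> S \<longrightarrow> (\<exists>a\<in>S. dist z a < r))"

definition hyperbolic_filling :: "(int \<Rightarrow> 'a::metric_space set) \<Rightarrow> bool" where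
  "hyperbolic_filling Xs \<longleftrightarrow> (\<forall>n. maximal_separated (2 powr (- real_of_int n - 1)) (Xs n))"

definition level_fun :: "(int \<Rightarrow> 'a::metric_space set) \<Rightarrow> (int \<times> 'a \<Rightarrow> complex) \<Rightarrow> int \<Rightarrow> 'a \<Rightarrow> ennreal" where
  "level_fun Xs u k z =
     (\<integral>\<^sup>+ \<xi>. ennreal (norm (u (k, \<xi>))) * indicator (hf_ball (k, \<xi>)) z \<partial>count_space (Xs k))"

definition I_qnorm :: "'a::metric_space measure \<Rightarrow> (int \<Rightarrow> 'a set) \<Rightarrow> real \<Rightarrow> ennreal \<Rightarrow> ennreal
    \<Rightarrow> (int \<times> 'a \<Rightarrow> complex) \<Rightarrow> ennreal" where
  "I_qnorm \<mu> Xs s p q u =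
     lq_qnorm q (\<lambda>k. ennreal (2 powr (real_of_int k * s)) * Lp_qnorm \<mu> p (level_fun Xs u k))"

definition I_space :: "'a::metric_space measure \<Rightarrow> (int \<Rightarrow> 'a set) \<Rightarrow> real \<Rightarrow> ennreal \<Rightarrow> ennreal
    \<Rightarrow> (int \<times> 'a \<Rightarrow> complex) set" where
  "I_space \<mu> Xs s p q = {u \<in> hf_funs Xs. I_qnorm \<mu> Xs s p q u < \<infinity>}"

(* Calder\<acute>on product quasi-norm of two lattices of functions on X (counting measure,
   so "a.e." means "everywhere on X") *)
definition calderon_qnorm :: "(int \<Rightarrow> 'a set) \<Rightarrow> ((int \<times> 'a \<Rightarrow> complex) \<Rightarrow> ennreal)
    \<Rightarrow> ((int \<times> 'a \<Rightarrow> complex) \<Rightarrow> ennreal) \<Rightarrow> real \<Rightarrow> (int \<times> 'a \<Rightarrow> complex) \<Rightarrow> ennreal" where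
  "calderon_qnorm Xs N0 N1 \<theta> f =
     Inf {ennreal c | c. c > 0 \<and>
        (\<exists>g h. g \<in> hf_funs Xs \<and> h \<in> hf_funs Xs \<and> N0 g \<le> 1 \<and> N1 h \<le> 1 \<and>
           (\<forall>x\<in>hf_vertices Xs. norm (f x) \<le> c * norm (g x) powr (1 - \<theta>) * norm (h x) powr \<theta>))}"

definition calderon_space :: "(int \<Rightarrow> 'a set) \<Rightarrow> ((int \<times> 'a \<Rightarrow> complex) \<Rightarrow> ennreal)
    \<Rightarrow> ((int \<times> 'a \<Rightarrow> complex) \<Rightarrow> ennreal) \<Rightarrow> real \<Rightarrow> (int \<times> 'a \<Rightarrow> complex) set" where
  "calderon_space Xs N0 N1 \<theta> = {f \<in> hf_funs Xs. calderon_qnorm Xs N0 N1 \<theta> f < \<infinity>}"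

end

theory Submission
  imports Defs "HOL-Probability.Essential_Supremum"
begin

lemma epow_ennreal: "0 \<le> x \<Longrightarrow> epow (ennreal x) r = ennreal (x powr r)"
  by (simp add: epow_def)

lemma epow_top[simp]: "epow top r = top"
  by (simp add: epow_def)

lemma epow_zero[simp]: "epow 0 r = 0"
  by (simp add: epow_def)

lemma epow_one_exp[simp]: "epow x 1 = x"
  by (cases x) (auto simp: epow_def)

lemma epow_one_base[simp]: "epow 1 r = 1"
  by (simp add: epow_def)

lemma epow_eq_top_iff: "epow x r = top \<longleftrightarrow> x = top"
  by (simp add: epow_def)

lemma epow_eq_0_iff: "epow x r = 0 \<longleftrightarrow> x = 0"
  by (cases x) (auto simp: epow_def)

lemma epow_fin_top: "epow (ennreal x * top) r = epow (ennreal x) r * epow top r"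
proof (cases "x > 0")
  case True
  then have "ennreal x * top = top" by (simp add: ennreal_mult_top)
  moreover have "epow (ennreal x) r = ennreal (x powr r)" using True by (simp add: epow_ennreal)
  moreover have "ennreal (x powr r) * top = top" using True by (simp add: ennreal_mult_top)
  ultimately show ?thesis by simp
next
  case False
  then have "ennreal x = 0" by (simp add: ennreal_eq_0_iff)
  then show ?thesis by simp
qed

lemma epow_mult: "epow (a * b) r = epow a r * epow b r"
proof (cases a; cases b)
  fix x y assume a: "a = ennreal x" "0 \<le> x" and b: "b = ennreal y" "0 \<le> y"
  have "a * b = ennreal (x * y)" using a b by (simp add: ennreal_mult)
  then have "epow (a * b) r = ennreal ((x * y) powr r)" using a b by (simp add: epow_ennreal)
  also have "\<dots> = ennreal (x powr r) * ennreal (y powr r)" using a b by (simp add: powr_mult ennreal_mult)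
  finally show ?thesis using a b by (simp add: epow_ennreal)
next
  fix x assume a: "a = ennreal x" "0 \<le> x" and b: "b = top"
  then show ?thesis using epow_fin_top by simp
next
  fix y assume a: "a = top" and b: "b = ennreal y" "0 \<le> y"
  then show ?thesis using epow_fin_top[of y r] by (simp add: mult.commute)
next
  assume "a = top" "b = top" then show ?thesis by simp
qed

lemma epow_epow: "epow (epow x a) b = epow x (a * b)"
  by (cases x) (auto simp: epow_def powr_powr)

lemma epow_mono: assumes xy: "x \<le> y" and r: "0 \<le> r" shows "epow x r \<le> epow y r"
proof (cases "y = top")
  case True then show ?thesis by simp
next
  case False
  then obtain b where b: "y = ennreal b" "0 \<le> b" using ennreal_cases[of y] by blast
  have "x \<noteq> top" using xy False using neq_top_trans by blast
  then obtain a where a: "x = ennreal a" "0 \<le> a" using ennreal_cases[of x] by blast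
  have ab: "a \<le> b" using xy a b by (metis ennreal_le_iff)
  have "a powr r \<le> b powr r" using a ab r by (intro powr_mono2) auto
  then show ?thesis unfolding a(1) b(1) epow_ennreal[OF a(2)] epow_ennreal[OF b(2)]
    by (rule ennreal_leI)
qed

lemma epow_le_one: "x \<le> 1 \<Longrightarrow> 0 \<le> r \<Longrightarrow> epow x r \<le> 1"
  using epow_mono[of x 1 r] by simp

lemma epow_zero_exp_le: "x \<noteq> top \<Longrightarrow> epow x 0 \<le> 1"
  by (cases x) (auto simp: epow_def)

lemma epow_zero_exp: "x \<noteq> top \<Longrightarrow> x \<noteq> 0 \<Longrightarrow> epow x 0 = 1"
  by (cases x) (auto simp: epow_def)

lemma epow_measurable[measurable]:
  assumes [measurable]: "f \<in> borel_measurable M"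
  shows "(\<lambda>z. epow (f z) r) \<in> borel_measurable M"
  unfolding epow_def by measurable

lemma epow_cmult: "0 \<le> c \<Longrightarrow> epow (ennreal c * x) r = ennreal (c powr r) * epow x r"
  by (simp add: epow_mult epow_ennreal)

lemma Lp_fin: "p \<noteq> top \<Longrightarrow> Lp_qnorm M p f = epow (\<integral>\<^sup>+ z. epow (f z) (enn2real p) \<partial>M) (1 / enn2real p)"
  by (simp add: Lp_qnorm_def)

lemma Lp_inf: "Lp_qnorm M top f = ess_sup_enn M f"
  by (simp add: Lp_qnorm_def)

lemma ess_AE:
  assumes "f \<in> borel_measurable M"
  shows "AE x in M. f x \<le> ess_sup_enn M f"
proof -
  have "ess_sup_enn M f = esssup M f"
    unfolding ess_sup_enn_def using esssup_eq_AE[OF assms] by simp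
  then show ?thesis using esssup_AE[of f M] by simp
qed

lemma ess_le: "AE x in M. f x \<le> C \<Longrightarrow> ess_sup_enn M f \<le> C"
  unfolding ess_sup_enn_def by (rule Inf_lower) simp

lemma ess_mono: "(\<And>z. f z \<le> g z) \<Longrightarrow> ess_sup_enn M f \<le> ess_sup_enn M g"
  unfolding ess_sup_enn_def
  by (rule Inf_superset_mono) (auto elim: eventually_mono intro: order_trans)

lemma Lp_mono:
  assumes "\<And>z. f z \<le> g z"
  shows "Lp_qnorm M p f \<le> Lp_qnorm M p g"
proof (cases "p = top")
  case True then show ?thesis using ess_mono[OF assms] by (simp add: Lp_inf)
next
  case False
  have "(\<integral>\<^sup>+ z. epow (f z) (enn2real p) \<partial>M) \<le> (\<integral>\<^sup>+ z. epow (g z) (enn2real p) \<partial>M)"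
    by (intro nn_integral_mono epow_mono assms) simp
  then show ?thesis using False by (simp add: Lp_fin epow_mono)
qed

lemma Lp_zero: "Lp_qnorm M p (\<lambda>_. 0) = 0"
proof (cases "p = top")
  case True
  have "ess_sup_enn M (\<lambda>_. 0) \<le> 0" by (rule ess_le) simp
  then show ?thesis using True by (simp add: Lp_inf)
next
  case False then show ?thesis by (simp add: Lp_fin)
qed

lemma Lp_cmult:
  assumes f: "f \<in> borel_measurable M" and c: "0 \<le> c" and p: "0 < p"
  shows "Lp_qnorm M p (\<lambda>z. ennreal c * f z) \<le> ennreal c * Lp_qnorm M p f"
proof (cases "p = top")
  case True
  have "AE z in M. ennreal c * f z \<le> ennreal c * ess_sup_enn M f"
    using ess_AE[OF f] by (auto elim!: eventually_mono intro: mult_left_mono)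
  then show ?thesis using True by (simp add: Lp_inf ess_le)
next
  case False
  define P where "P = enn2real p"
  have P: "0 < P" using p False by (simp add: P_def enn2real_positive_iff less_top)
  have "(\<integral>\<^sup>+ z. epow (ennreal c * f z) P \<partial>M) = (\<integral>\<^sup>+ z. ennreal (c powr P) * epow (f z) P \<partial>M)"
    using c by (simp add: epow_cmult)
  also have "\<dots> = ennreal (c powr P) * (\<integral>\<^sup>+ z. epow (f z) P \<partial>M)"
    by (rule nn_integral_cmult) (use f in measurable)
  finally have eq: "(\<integral>\<^sup>+ z. epow (ennreal c * f z) P \<partial>M) = ennreal (c powr P) * (\<integral>\<^sup>+ z. epow (f z) P \<partial>M)" .
  have cc: "(c powr P) powr (1 / P) = c"
    using c P by (simp add: powr_powr)
  show ?thesis unfolding Lp_fin[OF False] P_def[symmetric] eq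
    using c by (simp add: epow_cmult cc)
qed

lemma Lp_zero_AE:
  assumes f: "f \<in> borel_measurable M" and p: "0 < p" and z: "Lp_qnorm M p f = 0"
  shows "AE x in M. f x = 0"
proof (cases "p = top")
  case True
  then have "AE x in M. f x \<le> 0" using ess_AE[OF f] z by (simp add: Lp_inf)
  then show ?thesis by (auto elim: eventually_mono)
next
  case False
  define P where "P = enn2real p"
  have "(\<integral>\<^sup>+ z. epow (f z) P \<partial>M) = 0"
    using z False by (simp add: Lp_fin P_def epow_eq_0_iff)
  then have "AE x in M. epow (f x) P = 0"
    by (subst (asm) nn_integral_0_iff_AE) (use f in measurable)
  then show ?thesis by (auto elim: eventually_mono simp: epow_eq_0_iff)
qed

lemma Lp_fin_AE:
  assumes f: "f \<in> borel_measurable M" and p: "p \<noteq> top" and z: "Lp_qnorm M p f \<noteq> top"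
  shows "AE x in M. f x \<noteq> top"
proof -
  define P where "P = enn2real p"
  have "(\<integral>\<^sup>+ z. epow (f z) P \<partial>M) \<noteq> top"
    using z p by (simp add: Lp_fin P_def epow_eq_top_iff)
  then have "AE x in M. epow (f x) P \<noteq> top"
    using nn_integral_PInf_AE[of "\<lambda>x. epow (f x) P" M] f by simp
  then show ?thesis by (auto elim: eventually_mono simp: epow_eq_top_iff)
qed

lemma enn2real_pos: "0 < p \<Longrightarrow> p \<noteq> top \<Longrightarrow> 0 < enn2real p"
  by (simp add: enn2real_positive_iff less_top)

lemma inverse_fin: "0 < p \<Longrightarrow> p \<noteq> top \<Longrightarrow> inverse p = ennreal (1 / enn2real p)"
proof -
  assume "0 < p" "p \<noteq> top"
  then obtain P where "p = ennreal P" "0 < P" by (cases p) auto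
  then show ?thesis by (simp add: inverse_ennreal divide_inverse)
qed

lemma Lp_pow:
  assumes f: "f \<in> borel_measurable M" and p0: "0 < p0" and p: "0 < p" and pp: "p = top \<Longrightarrow> p0 = top"
  defines "\<alpha> \<equiv> (if p = top then 1 else enn2real p * enn2real (inverse p0))"
  shows "Lp_qnorm M p0 (\<lambda>z. epow (f z) \<alpha>) \<le> epow (Lp_qnorm M p f) \<alpha>"
proof (cases "p = top")
  case True
  then show ?thesis using pp by (simp add: \<alpha>_def)
next
  case pfin: False
  define P where "P = enn2real p"
  have P: "0 < P" using p pfin by (simp add: P_def enn2real_pos)
  show ?thesis
  proof (cases "p0 = top")
    case True
    then have a0: "\<alpha> = 0" using pfin by (simp add: \<alpha>_def)
    define A where "A = Lp_qnorm M p f"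
    show ?thesis
    proof (cases "A = 0")
      case True
      then have "AE x in M. f x = 0" using Lp_zero_AE[OF f p] by (simp add: A_def)
      then have "AE x in M. epow (f x) \<alpha> \<le> 0" by (auto elim: eventually_mono)
      then have "ess_sup_enn M (\<lambda>z. epow (f z) \<alpha>) \<le> 0" by (rule ess_le)
      then show ?thesis using \<open>p0 = top\<close> by (simp add: Lp_inf)
    next
      case A0: False
      show ?thesis
      proof (cases "A = top")
        case True then show ?thesis by (simp add: A_def)
      next
        case False
        then have "AE x in M. f x \<noteq> top" using Lp_fin_AE[OF f pfin] by (simp add: A_def)
        then have "AE x in M. epow (f x) \<alpha> \<le> 1" using a0 by (auto elim: eventually_mono intro: epow_zero_exp_le)
        then have "ess_sup_enn M (\<lambda>z. epow (f z) \<alpha>) \<le> 1" by (rule ess_le)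
        moreover have "epow A \<alpha> = 1" using a0 A0 False by (simp add: epow_zero_exp)
        ultimately show ?thesis using \<open>p0 = top\<close> by (simp add: Lp_inf A_def)
      qed
    qed
  next
    case p0fin: False
    define P0 where "P0 = enn2real p0"
    have P0: "0 < P0" using p0 p0fin by (simp add: P0_def enn2real_pos)
    have ia: "\<alpha> = P / P0" using pfin p0 p0fin by (simp add: \<alpha>_def P_def P0_def inverse_fin)
    have eq1: "\<alpha> * P0 = P" using P0 ia by simp
    have eq2: "1 / P * \<alpha> = 1 / P0" "\<alpha> / P = 1 / P0" using P ia by simp_all
    have "Lp_qnorm M p0 (\<lambda>z. epow (f z) \<alpha>) = epow (\<integral>\<^sup>+ z. epow (f z) P \<partial>M) (1 / P0)"
      using p0fin by (simp add: Lp_fin P0_def[symmetric] epow_epow eq1)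
    also have "\<dots> = epow (Lp_qnorm M p f) \<alpha>"
      using pfin by (simp add: Lp_fin P_def[symmetric] epow_epow eq2)
    finally show ?thesis by simp
  qed
qed

lemma nn_holder:
  assumes f: "f \<in> borel_measurable M" and g: "g \<in> borel_measurable M"
    and r: "1 < r" and r': "1 < r'" and rr: "1 / r + 1 / r' = 1"
  shows "(\<integral>\<^sup>+ z. f z * g z \<partial>M) \<le> epow (\<integral>\<^sup>+ z. epow (f z) r \<partial>M) (1 / r) * epow (\<integral>\<^sup>+ z. epow (g z) r' \<partial>M) (1 / r')"
    (is "?L \<le> epow ?A _ * epow ?B _")
proof -
  have [measurable]: "f \<in> borel_measurable M" "g \<in> borel_measurable M" using f g by auto
  consider "?A = 0" | "?B = 0" | "?A = top" "?B \<noteq> 0" | "?B = top" "?A \<noteq> 0" | "?A \<noteq> 0" "?B \<noteq> 0" "?A \<noteq> top" "?B \<noteq> top"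
    by blast
  then show ?thesis
  proof cases
    case 1
    then have "AE z in M. epow (f z) r = 0" by (subst (asm) nn_integral_0_iff_AE) auto
    then have "AE z in M. f z * g z = 0" by (auto elim: eventually_mono simp: epow_eq_0_iff)
    then have "?L = 0" by (subst nn_integral_0_iff_AE) auto
    then show ?thesis by simp
  next
    case 2
    then have "AE z in M. epow (g z) r' = 0" by (subst (asm) nn_integral_0_iff_AE) auto
    then have "AE z in M. f z * g z = 0" by (auto elim: eventually_mono simp: epow_eq_0_iff)
    then have "?L = 0" by (subst nn_integral_0_iff_AE) auto
    then show ?thesis by simp
  next
    case 3
    then have "epow ?B (1 / r') \<noteq> 0" by (simp add: epow_eq_0_iff)
    then show ?thesis using 3 by (simp add: ennreal_top_mult)
  next
    case 4
    then have "epow ?A (1 / r) \<noteq> 0" by (simp add: epow_eq_0_iff)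
    then show ?thesis using 4 by (simp add: ennreal_mult_top)
  next
    case 5
    obtain a0 where a0: "?A = ennreal a0" "0 < a0"
      using 5 by (cases ?A) (auto simp: ennreal_eq_0_iff)
    obtain b0 where b0: "?B = ennreal b0" "0 < b0"
      using 5 by (cases ?B) (auto simp: ennreal_eq_0_iff)
    define a where "a = a0 powr (1 / r)"
    define b where "b = b0 powr (1 / r')"
    have a: "0 < a" "a powr r = a0" using a0 r by (simp_all add: a_def powr_powr)
    have b: "0 < b" "b powr r' = b0" using b0 r' by (simp_all add: b_def powr_powr)
    have finf: "AE z in M. epow (f z) r \<noteq> top"
      using nn_integral_PInf_AE[of "\<lambda>z. epow (f z) r" M] a0 by simp
    have fing: "AE z in M. epow (g z) r' \<noteq> top"
      using nn_integral_PInf_AE[of "\<lambda>z. epow (g z) r'" M] b0 by simp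
    define ca where "ca = a * b / (r * a0)"
    define cb where "cb = a * b / (r' * b0)"
    have ca: "0 \<le> ca" and cb: "0 \<le> cb" using a b a0 b0 r r' by (simp_all add: ca_def cb_def)
    have pt: "f z * g z \<le> ennreal ca * epow (f z) r + ennreal cb * epow (g z) r'"
      if "epow (f z) r \<noteq> top" "epow (g z) r' \<noteq> top" for z
    proof -
      have fz: "f z \<noteq> top" and gz: "g z \<noteq> top" using that by (simp_all add: epow_eq_top_iff)
      obtain x where x: "f z = ennreal x" "0 \<le> x" using fz by (cases "f z") auto
      obtain y where y: "g z = ennreal y" "0 \<le> y" using gz by (cases "g z") auto
      have Y: "(x / a) * (y / b) \<le> (x / a) powr r / r + (y / b) powr r' / r'"
        using Youngs_inequality[of r r' "x / a" "y / b"] r r' rr x y a b by simp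
      have xa: "(x / a) powr r = x powr r / a0" using x a by (simp add: powr_divide)
      have yb: "(y / b) powr r' = y powr r' / b0" using y b by (simp add: powr_divide)
      have "x * y = a * b * ((x / a) * (y / b))" using a b by simp
      also have "\<dots> \<le> a * b * ((x / a) powr r / r + (y / b) powr r' / r')"
        using Y a b by (intro mult_left_mono) auto
      also have "\<dots> = ca * x powr r + cb * y powr r'"
        unfolding xa yb ca_def cb_def using r r' a0 b0 by (simp add: field_simps)
      finally have xy: "x * y \<le> ca * x powr r + cb * y powr r'" .
      have e1: "f z * g z = ennreal (x * y)" using x y by (simp add: ennreal_mult)
      have e2: "ennreal ca * epow (f z) r + ennreal cb * epow (g z) r' = ennreal (ca * x powr r + cb * y powr r')"
        using x y ca cb by (simp add: epow_ennreal ennreal_mult ennreal_plus)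
      show ?thesis unfolding e1 e2 using xy by (rule ennreal_leI)
    qed
    have "?L \<le> (\<integral>\<^sup>+ z. ennreal ca * epow (f z) r + ennreal cb * epow (g z) r' \<partial>M)"
    proof (rule nn_integral_mono_AE)
      show "AE z in M. f z * g z \<le> ennreal ca * epow (f z) r + ennreal cb * epow (g z) r'"
        using finf fing by eventually_elim (rule pt)
    qed
    also have "\<dots> = ennreal ca * ?A + ennreal cb * ?B"
      by (simp add: nn_integral_add nn_integral_cmult)
    also have "\<dots> = ennreal (ca * a0 + cb * b0)"
      using ca cb a0 b0 by (simp add: ennreal_mult ennreal_plus)
    also have "ca * a0 + cb * b0 = a * b * (1 / r + 1 / r')"
      using a0 b0 r r' by (simp add: ca_def cb_def field_simps)
    also have "\<dots> = a * b" using rr by simp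
    also have "ennreal (a * b) = epow ?A (1 / r) * epow ?B (1 / r')"
      using a0 b0 a b by (simp add: epow_ennreal a_def b_def ennreal_mult)
    finally show ?thesis .
  qed
qed

lemma inv_real:
  assumes "0 < p0"
  shows "inverse p0 = ennreal (enn2real (inverse p0))"
    and "enn2real (inverse p0) = (if p0 = top then 0 else 1 / enn2real p0)"
proof -
  show "enn2real (inverse p0) = (if p0 = top then 0 else 1 / enn2real p0)"
  proof (cases "p0 = top")
    case True then show ?thesis by simp
  next
    case False
    then show ?thesis using assms by (simp add: inverse_fin)
  qed
  show "inverse p0 = ennreal (enn2real (inverse p0))"
  proof (cases "p0 = top")
    case True then show ?thesis by simp
  next
    case False
    then show ?thesis using assms by (simp add: inverse_fin)
  qed
qed

lemma inv_gt1: assumes "0 < 1 / x" "1 / x < 1" shows "1 < (x::real)"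
proof -
  have x: "0 < x" using assms(1) by simp
  then show ?thesis using assms(2) by (simp add: divide_less_eq_1_pos)
qed

lemma holder_inf:
  assumes F: "F \<in> borel_measurable M" and G: "G \<in> borel_measurable M"
    and \<theta>: "0 < \<theta>" "\<theta> < 1" and p1: "p1 \<noteq> top" "0 < p1" and P: "0 < P"
    and PP: "\<theta> * P = enn2real p1"
  shows "epow (\<integral>\<^sup>+z. epow (epow (F z) (1 - \<theta>) * epow (G z) \<theta>) P \<partial>M) (1 / P)
     \<le> epow (ess_sup_enn M F) (1 - \<theta>) * epow (Lp_qnorm M p1 G) \<theta>"
proof -
  have [measurable]: "F \<in> borel_measurable M" "G \<in> borel_measurable M" using F G by auto
  define E where "E = ess_sup_enn M F"
  define P1 where "P1 = enn2real p1"
  have P1: "0 < P1" using p1 by (simp add: P1_def enn2real_pos)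
  define I1 where "I1 = (\<integral>\<^sup>+z. epow (G z) P1 \<partial>M)"
  have "AE z in M. F z \<le> E" using ess_AE[OF F] by (simp add: E_def)
  then have "AE z in M. epow (epow (F z) (1 - \<theta>) * epow (G z) \<theta>) P \<le> epow E ((1 - \<theta>) * P) * epow (G z) P1"
  proof eventually_elim
    case (elim z)
    have "epow (epow (F z) (1 - \<theta>) * epow (G z) \<theta>) P = epow (F z) ((1 - \<theta>) * P) * epow (G z) P1"
      using PP by (simp add: epow_mult epow_epow P1_def)
    also have "\<dots> \<le> epow E ((1 - \<theta>) * P) * epow (G z) P1"
      using elim \<theta> P by (intro mult_right_mono epow_mono) auto
    finally show ?case .
  qed
  then have "(\<integral>\<^sup>+z. epow (epow (F z) (1 - \<theta>) * epow (G z) \<theta>) P \<partial>M) \<le> (\<integral>\<^sup>+z. epow E ((1 - \<theta>) * P) * epow (G z) P1 \<partial>M)"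
    by (rule nn_integral_mono_AE)
  also have "\<dots> = epow E ((1 - \<theta>) * P) * I1"
    unfolding I1_def by (rule nn_integral_cmult) measurable
  finally have "epow (\<integral>\<^sup>+z. epow (epow (F z) (1 - \<theta>) * epow (G z) \<theta>) P \<partial>M) (1 / P) \<le> epow (epow E ((1 - \<theta>) * P) * I1) (1 / P)"
    using P by (intro epow_mono) auto
  also have "\<dots> = epow E (1 - \<theta>) * epow I1 (1 / P)"
    using P by (simp add: epow_mult epow_epow)
  also have "epow I1 (1 / P) = epow (Lp_qnorm M p1 G) \<theta>"
  proof -
    have "1 / P1 * \<theta> = 1 / P" using PP P \<theta> P1 by (simp add: P1_def[symmetric] field_simps)
    then show ?thesis using p1 by (simp add: Lp_fin P1_def[symmetric] I1_def[symmetric] epow_epow)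
  qed
  finally show ?thesis by (simp add: E_def)
qed

lemma Lp_holder:
  assumes F: "F \<in> borel_measurable M" and G: "G \<in> borel_measurable M"
    and \<theta>: "0 < \<theta>" "\<theta> < 1" and p0: "0 < p0" and p1: "0 < p1"
    and pdef: "inverse p = ennreal (1 - \<theta>) * inverse p0 + ennreal \<theta> * inverse p1"
  shows "Lp_qnorm M p (\<lambda>z. epow (F z) (1 - \<theta>) * epow (G z) \<theta>)
     \<le> epow (Lp_qnorm M p0 F) (1 - \<theta>) * epow (Lp_qnorm M p1 G) \<theta>"
proof -
  have [measurable]: "F \<in> borel_measurable M" "G \<in> borel_measurable M" using F G by auto
  define i0 where "i0 = enn2real (inverse p0)"
  define i1 where "i1 = enn2real (inverse p1)"
  have i0: "inverse p0 = ennreal i0" "i0 = (if p0 = top then 0 else 1 / enn2real p0)"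
    using inv_real[OF p0] by (simp_all add: i0_def)
  have i1: "inverse p1 = ennreal i1" "i1 = (if p1 = top then 0 else 1 / enn2real p1)"
    using inv_real[OF p1] by (simp_all add: i1_def)
  have i0p: "0 \<le> i0" using i0(2) by simp
  have i1p: "0 \<le> i1" using i1(2) by simp
  have ip: "inverse p = ennreal ((1 - \<theta>) * i0 + \<theta> * i1)"
    using pdef i0 i1 \<theta> i0p i1p by (simp add: ennreal_mult ennreal_plus)
  show ?thesis
  proof (cases "p = top")
    case True
    then have "ennreal ((1 - \<theta>) * i0 + \<theta> * i1) = 0" using ip by simp
    then have s0: "(1 - \<theta>) * i0 + \<theta> * i1 \<le> 0" by (metis ennreal_eq_0_iff)
    have h1: "0 \<le> (1 - \<theta>) * i0" "0 \<le> \<theta> * i1" using \<theta> i0p i1p by simp_all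
    have "(1 - \<theta>) * i0 = 0" "\<theta> * i1 = 0" using s0 h1 by linarith+
    then have "i0 = 0" "i1 = 0" using \<theta> by simp_all
    then have "p0 = top" "p1 = top" using i0 i1 p0 p1 enn2real_pos
      by (metis divide_eq_0_iff less_numeral_extra(3) one_neq_zero)+
    have "AE z in M. epow (F z) (1 - \<theta>) * epow (G z) \<theta> \<le> epow (ess_sup_enn M F) (1 - \<theta>) * epow (ess_sup_enn M G) \<theta>"
      using ess_AE[OF F] ess_AE[OF G]
    proof eventually_elim
      case (elim z) then show ?case using \<theta> by (intro mult_mono epow_mono) auto
    qed
    then show ?thesis using True \<open>p0 = top\<close> \<open>p1 = top\<close> by (simp add: Lp_inf ess_le)
  next
    case pfin: False
    have pnz: "p \<noteq> 0" using ip by auto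
    define P where "P = enn2real p"
    have ppos: "0 < p" using pnz by (metis not_gr_zero)
    have P: "0 < P" using enn2real_pos[OF ppos pfin] by (simp add: P_def)
    have "ennreal (1 / P) = ennreal ((1 - \<theta>) * i0 + \<theta> * i1)"
      using ip inverse_fin[of p] pfin ppos by (simp add: P_def)
    then have iP: "1 / P = (1 - \<theta>) * i0 + \<theta> * i1"
      using P \<theta> i0p i1p by (subst (asm) ennreal_inj) auto
    have LHS: "Lp_qnorm M p (\<lambda>z. epow (F z) (1 - \<theta>) * epow (G z) \<theta>)
        = epow (\<integral>\<^sup>+z. epow (epow (F z) (1 - \<theta>) * epow (G z) \<theta>) P \<partial>M) (1 / P)"
      using pfin by (simp add: Lp_fin P_def)
    show ?thesis
    proof (cases "p0 = top")
      case p0top: True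
      show ?thesis
      proof (cases "p1 = top")
        case True
        then have "1 / P = 0" using iP i0 i1 p0top by simp
        then show ?thesis using P by simp
      next
        case False
        have "\<theta> * P = enn2real p1"
          using iP i0 i1 p0top False P \<theta> p1 enn2real_pos[OF p1 False] by (simp add: field_simps)
        then show ?thesis unfolding LHS
          using holder_inf[OF F G \<theta> False p1 P] p0top by (simp add: Lp_inf)
      qed
    next
      case p0fin: False
      show ?thesis
      proof (cases "p1 = top")
        case p1top: True
        have PP: "(1 - \<theta>) * P = enn2real p0"
          using iP i0 i1 p1top p0fin P \<theta> p0 enn2real_pos[OF p0 p0fin] by (simp add: field_simps)
        have \<theta>': "0 < 1 - \<theta>" "1 - \<theta> < 1" using \<theta> by auto
        have "epow (\<integral>\<^sup>+z. epow (epow (G z) (1 - (1 - \<theta>)) * epow (F z) (1 - \<theta>)) P \<partial>M) (1 / P)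
          \<le> epow (ess_sup_enn M G) (1 - (1 - \<theta>)) * epow (Lp_qnorm M p0 F) (1 - \<theta>)"
          by (rule holder_inf[OF G F \<theta>' p0fin p0 P PP])
        then show ?thesis unfolding LHS using p1top by (simp add: Lp_inf mult.commute)
      next
        case p1fin: False
        define P0 where "P0 = enn2real p0"
        define P1 where "P1 = enn2real p1"
        have P0: "0 < P0" using p0 p0fin by (simp add: P0_def enn2real_pos)
        have P1: "0 < P1" using p1 p1fin by (simp add: P1_def enn2real_pos)
        have iP': "1 / P = (1 - \<theta>) / P0 + \<theta> / P1"
          using iP i0 i1 p0fin p1fin by (simp add: P0_def P1_def)
        define r where "r = P0 / ((1 - \<theta>) * P)"
        define r' where "r' = P1 / (\<theta> * P)"
        have ir: "1 / r = (1 - \<theta>) * P / P0" "1 / r' = \<theta> * P / P1"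
          by (simp_all add: r_def r'_def)
        have ir_pos: "0 < 1 / r" "0 < 1 / r'" using ir \<theta> P P0 P1 by simp_all
        have rr: "1 / r + 1 / r' = 1"
        proof -
          have "1 / r + 1 / r' = P * ((1 - \<theta>) / P0 + \<theta> / P1)" using ir by (simp add: field_simps)
          also have "\<dots> = 1" using iP' P by (simp flip: iP')
          finally show ?thesis .
        qed
        have r1: "1 < r" "1 < r'"
        proof -
          have "1 / r < 1" "1 / r' < 1" using rr ir_pos by linarith+
          then show "1 < r" "1 < r'" using ir_pos inv_gt1 by blast+
        qed
        define f where "f z = epow (F z) ((1 - \<theta>) * P)" for z
        define g where "g z = epow (G z) (\<theta> * P)" for z
        have [measurable]: "f \<in> borel_measurable M" "g \<in> borel_measurable M"
          unfolding f_def[abs_def] g_def[abs_def] by measurable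
        have fr: "epow (f z) r = epow (F z) P0" for z
        proof -
          have "(1 - \<theta>) * P * r = P0" using \<theta> P P0 by (simp add: r_def)
          then show ?thesis by (simp add: f_def epow_epow)
        qed
        have gr: "epow (g z) r' = epow (G z) P1" for z
        proof -
          have "\<theta> * P * r' = P1" using \<theta> P P1 by (simp add: r'_def)
          then show ?thesis by (simp add: g_def epow_epow)
        qed
        define I0 where "I0 = (\<integral>\<^sup>+z. epow (F z) P0 \<partial>M)"
        define I1 where "I1 = (\<integral>\<^sup>+z. epow (G z) P1 \<partial>M)"
        have "(\<integral>\<^sup>+z. epow (epow (F z) (1 - \<theta>) * epow (G z) \<theta>) P \<partial>M) = (\<integral>\<^sup>+z. f z * g z \<partial>M)"
          by (simp add: f_def g_def epow_mult epow_epow)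
        also have "\<dots> \<le> epow I0 (1 / r) * epow I1 (1 / r')"
          using nn_holder[of f M g r r'] r1 rr by (simp add: fr gr I0_def I1_def)
        finally have "epow (\<integral>\<^sup>+z. epow (epow (F z) (1 - \<theta>) * epow (G z) \<theta>) P \<partial>M) (1 / P)
            \<le> epow (epow I0 (1 / r) * epow I1 (1 / r')) (1 / P)"
          using P by (intro epow_mono) auto
        also have "\<dots> = epow I0 (1 / P0 * (1 - \<theta>)) * epow I1 (1 / P1 * \<theta>)"
        proof -
          have "1 / r * (1 / P) = 1 / P0 * (1 - \<theta>)" "1 / r' * (1 / P) = 1 / P1 * \<theta>"
            using ir P by simp_all
          then show ?thesis by (simp add: epow_mult epow_epow)
        qed
        also have "\<dots> = epow (Lp_qnorm M p0 F) (1 - \<theta>) * epow (Lp_qnorm M p1 G) \<theta>"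
          using p0fin p1fin by (simp add: Lp_fin P0_def[symmetric] P1_def[symmetric] I0_def[symmetric] I1_def[symmetric] epow_epow)
        finally show ?thesis unfolding LHS .
      qed
    qed
  qed
qed

locale dbl =
  fixes \<mu> :: "'a::metric_space measure" and c :: real
  assumes sets_mu: "sets \<mu> = sets borel"
    and pos: "\<And>\<xi> r. r > 0 \<Longrightarrow> 0 < emeasure \<mu> (ball \<xi> r)"
    and fin: "\<And>\<xi> r. r > 0 \<Longrightarrow> emeasure \<mu> (ball \<xi> r) < top"
    and c0: "0 \<le> c"
    and dbl: "\<And>\<xi> r. r > 0 \<Longrightarrow> emeasure \<mu> (ball \<xi> (2 * r)) \<le> ennreal c * emeasure \<mu> (ball \<xi> r)"
begin

lemma ball_sets[measurable]: "ball \<xi> r \<in> sets \<mu>"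
  using sets_mu by simp

lemma iter: "r > 0 \<Longrightarrow> emeasure \<mu> (ball \<xi> (2 ^ m * r)) \<le> ennreal (c ^ m) * emeasure \<mu> (ball \<xi> r)"
proof (induction m)
  case 0 then show ?case by simp
next
  case (Suc m)
  have "emeasure \<mu> (ball \<xi> (2 ^ Suc m * r)) = emeasure \<mu> (ball \<xi> (2 * (2 ^ m * r)))" by (simp add: mult.assoc)
  also have "\<dots> \<le> ennreal c * emeasure \<mu> (ball \<xi> (2 ^ m * r))" using Suc by (intro dbl) simp
  also have "\<dots> \<le> ennreal c * (ennreal (c ^ m) * emeasure \<mu> (ball \<xi> r))"
    using Suc by (intro mult_left_mono) auto
  also have "\<dots> = ennreal (c ^ Suc m) * emeasure \<mu> (ball \<xi> r)"
    using c0 by (simp add: ennreal_mult mult.assoc)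
  finally show ?case .
qed

lemma sep_card:
  fixes S :: "'a set"
  assumes sep: "\<forall>a\<in>S. \<forall>b\<in>S. a \<noteq> b \<longrightarrow> r \<le> dist a b" and r: "0 < r" and R: "0 < R"
    and m: "2 * R + r / 2 \<le> 2 ^ m * (r / 2)"
    and F: "finite F" "F \<subseteq> S \<inter> ball z R"
  shows "real (card F) \<le> c ^ m"
proof -
  define M where "M = emeasure \<mu> (ball z (R + r / 2))"
  have M: "0 < M" "M < top" using pos fin r R by (simp_all add: M_def)
  have le1: "M \<le> ennreal (c ^ m) * emeasure \<mu> (ball a (r / 2))" if "a \<in> F" for a
  proof -
    have "dist z a < R" using that F by auto
    have "ball z (R + r / 2) \<subseteq> ball a (2 ^ m * (r / 2))"
    proof
      fix x assume "x \<in> ball z (R + r / 2)"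
      then have "dist z x < R + r / 2" by simp
      moreover have "dist a x \<le> dist a z + dist z x" by (rule dist_triangle)
      moreover have "dist a z < R" using \<open>dist z a < R\<close> by (simp add: dist_commute)
      ultimately show "x \<in> ball a (2 ^ m * (r / 2))" using m by simp
    qed
    then have "M \<le> emeasure \<mu> (ball a (2 ^ m * (r / 2)))"
      unfolding M_def by (intro emeasure_mono) auto
    also have "\<dots> \<le> ennreal (c ^ m) * emeasure \<mu> (ball a (r / 2))" using r by (intro iter) simp
    finally show ?thesis .
  qed
  have disj: "disjoint_family_on (\<lambda>a. ball a (r / 2)) F"
    unfolding disjoint_family_on_def
  proof (intro ballI impI)
    fix a b assume ab: "a \<in> F" "b \<in> F" "a \<noteq> b"
    then have "r \<le> dist a b" using sep F by auto
    show "ball a (r / 2) \<inter> ball b (r / 2) = {}"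
    proof (rule ccontr)
      assume "ball a (r / 2) \<inter> ball b (r / 2) \<noteq> {}"
      then obtain y where y: "dist a y < r / 2" "dist b y < r / 2" by auto
      have "dist a b \<le> dist a y + dist b y" using dist_triangle[of a b y] dist_commute[of y b] by linarith
      then show False using y \<open>r \<le> dist a b\<close> by linarith
    qed
  qed
  have "(\<Sum>a\<in>F. emeasure \<mu> (ball a (r / 2))) = emeasure \<mu> (\<Union>a\<in>F. ball a (r / 2))"
    using disj F by (intro sum_emeasure) auto
  also have "\<dots> \<le> M"
  proof -
    have "(\<Union>a\<in>F. ball a (r / 2)) \<subseteq> ball z (R + r / 2)"
    proof
      fix y assume "y \<in> (\<Union>a\<in>F. ball a (r / 2))"
      then obtain a where a: "a \<in> F" "dist a y < r / 2" by auto
      then have "dist z a < R" using F by auto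
      then show "y \<in> ball z (R + r / 2)" using a dist_triangle[of z y a] by auto
    qed
    then show ?thesis unfolding M_def by (intro emeasure_mono) auto
  qed
  finally have sumle: "(\<Sum>a\<in>F. emeasure \<mu> (ball a (r / 2))) \<le> M" .
  have "of_nat (card F) * M = (\<Sum>a\<in>F. M)" by simp
  also have "\<dots> \<le> (\<Sum>a\<in>F. ennreal (c ^ m) * emeasure \<mu> (ball a (r / 2)))"
    by (intro sum_mono le1)
  also have "\<dots> = ennreal (c ^ m) * (\<Sum>a\<in>F. emeasure \<mu> (ball a (r / 2)))"
    by (simp add: sum_distrib_left)
  also have "\<dots> \<le> ennreal (c ^ m) * M" using sumle by (intro mult_left_mono) auto
  finally have le: "of_nat (card F) * M \<le> ennreal (c ^ m) * M" .
  obtain m0 where m0: "M = ennreal m0" "0 < m0" using M by (cases M) (auto simp: ennreal_eq_0_iff)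
  have e1: "of_nat (card F) * M = ennreal (real (card F) * m0)"
    unfolding m0(1) ennreal_of_nat_eq_real_of_nat by (rule ennreal_mult''[symmetric]) (use m0(2) in simp)
  have e2: "ennreal (c ^ m) * M = ennreal (c ^ m * m0)"
    unfolding m0(1) by (rule ennreal_mult''[symmetric]) (use m0(2) in simp)
  have "ennreal (real (card F) * m0) \<le> ennreal (c ^ m * m0)"
    using le unfolding e1 e2 .
  then have "real (card F) * m0 \<le> c ^ m * m0"
    using m0 c0 by (subst (asm) ennreal_le_iff) auto
  then show ?thesis using m0 by simp
qed

lemma sep_finite:
  fixes S :: "'a set"
  assumes sep: "\<forall>a\<in>S. \<forall>b\<in>S. a \<noteq> b \<longrightarrow> r \<le> dist a b" and r: "0 < r" and R: "0 < R"
    and m: "2 * R + r / 2 \<le> 2 ^ m * (r / 2)"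
  shows "finite (S \<inter> ball z R)" "real (card (S \<inter> ball z R)) \<le> c ^ m"
proof -
  show fin: "finite (S \<inter> ball z R)"
  proof (rule ccontr)
    assume "infinite (S \<inter> ball z R)"
    then obtain B where B: "finite B" "card B = nat \<lceil>c ^ m\<rceil> + 1" "B \<subseteq> S \<inter> ball z R"
      using infinite_arbitrarily_large by blast
    have "real (card B) \<le> c ^ m" using sep_card[OF sep r R m B(1,3)] .
    moreover have "c ^ m \<le> real (nat \<lceil>c ^ m\<rceil>)" by (rule real_nat_ceiling_ge)
    ultimately show False using B(2) by simp
  qed
  show "real (card (S \<inter> ball z R)) \<le> c ^ m" using sep_card[OF sep r R m fin subset_refl] .
qed

lemma sep_countable:
  fixes S :: "'a set"
  assumes sep: "\<forall>a\<in>S. \<forall>b\<in>S. a \<noteq> b \<longrightarrow> r \<le> dist a b" and r: "0 < r"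
  shows "countable S"
proof -
  fix z :: 'a
  have ex: "\<exists>m::nat. 2 * real (Suc n) + r / 2 \<le> 2 ^ m * (r / 2)" for n
  proof -
    have "\<exists>m::nat. (2 * real (Suc n) + r / 2) / (r / 2) < 2 ^ m"
      by (rule real_arch_pow) simp
    then obtain m :: nat where m: "(2 * real (Suc n) + r / 2) / (r / 2) < 2 ^ m" by blast
    have r2: "0 < r / 2" using r by simp
    have "2 * real (Suc n) + r / 2 < 2 ^ m * (r / 2)"
      using m unfolding divide_less_eq[of _ "r / 2"] using r2 by simp
    then have "2 * real (Suc n) + r / 2 \<le> 2 ^ m * (r / 2)" by simp
    then show ?thesis by blast
  qed
  have fin: "finite (S \<inter> ball z (real (Suc n)))" for n
  proof -
    obtain m where "2 * real (Suc n) + r / 2 \<le> 2 ^ m * (r / 2)" using ex by blast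
    then show ?thesis using sep_finite(1)[OF sep r, of "real (Suc n)" m z] by simp
  qed
  have eq: "S = (\<Union>n. S \<inter> ball z (real (Suc n)))"
  proof (intro equalityI subsetI)
    fix x assume x: "x \<in> S"
    obtain n :: nat where "dist z x < real n" using reals_Archimedean2[of "dist z x"] by (elim exE)
    then have "dist z x < real (Suc n)" by simp
    then have "x \<in> S \<inter> ball z (real (Suc n))" using x by simp
    then show "x \<in> (\<Union>n. S \<inter> ball z (real (Suc n)))" by (rule UN_I[OF UNIV_I])
  qed auto
  have "countable (\<Union>n. S \<inter> ball z (real (Suc n)))"
    by (rule countable_UN[OF countableI_type]) (rule countable_finite[OF fin])
  then show ?thesis by (subst eq)
qed

end

lemma hf_ball_eq: "hf_ball (k, \<xi>) = ball \<xi> (2 powr (- real_of_int k))"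
  by (simp add: hf_ball_def)

lemma real_pow_sum_bound:
  fixes a :: "'b \<Rightarrow> real"
  assumes "finite F" "\<And>i. i \<in> F \<Longrightarrow> 0 \<le> a i" "0 \<le> r"
  shows "(\<Sum>i\<in>F. a i powr r) \<le> real (card F) * (sum a F) powr r"
proof -
  have "(\<Sum>i\<in>F. a i powr r) \<le> (\<Sum>i\<in>F. (sum a F) powr r)"
  proof (rule sum_mono)
    fix i assume i: "i \<in> F"
    have "a i \<le> sum a F" using assms i by (intro member_le_sum) auto
    then show "a i powr r \<le> (sum a F) powr r" using assms i by (intro powr_mono2) auto
  qed
  then show ?thesis by simp
qed

locale hfd = dbl \<mu> c for \<mu> :: "'a::metric_space measure" and c +
  fixes Xs :: "int \<Rightarrow> 'a set"
  assumes filling: "hyperbolic_filling Xs"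
begin

lemma sepk: "\<forall>a\<in>Xs k. \<forall>b\<in>Xs k. a \<noteq> b \<longrightarrow> 2 powr (- real_of_int k - 1) \<le> dist a b"
  using filling unfolding hyperbolic_filling_def maximal_separated_def by blast

lemma countable_Xs: "countable (Xs k)"
  by (rule sep_countable[OF sepk]) simp

lemma rad_eq: "2 powr (- real_of_int k) = 2 * 2 powr (- real_of_int k - 1)"
proof -
  have "2 powr (- real_of_int k) = 2 powr (1 + (- real_of_int k - 1))" by simp
  also have "\<dots> = 2 powr 1 * 2 powr (- real_of_int k - 1)" by (rule powr_add)
  also have "\<dots> = 2 * 2 powr (- real_of_int k - 1)" by simp
  finally show ?thesis .
qed

lemma ovl:
  shows "finite (Xs k \<inter> ball z (2 powr (- real_of_int k)))"
    and "real (card (Xs k \<inter> ball z (2 powr (- real_of_int k)))) \<le> c ^ 4"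
proof -
  define r where "r = 2 powr (- real_of_int k - 1)"
  have r: "0 < r" by (simp add: r_def)
  have R: "2 powr (- real_of_int k) = 2 * r" by (simp add: r_def rad_eq)
  have m: "2 * (2 * r) + r / 2 \<le> 2 ^ 4 * (r / 2)" using r by simp
  have sep: "\<forall>a\<in>Xs k. \<forall>b\<in>Xs k. a \<noteq> b \<longrightarrow> r \<le> dist a b" using sepk by (simp add: r_def)
  show "finite (Xs k \<inter> ball z (2 powr (- real_of_int k)))"
    unfolding R using sep_finite(1)[OF sep r _ m] r by simp
  show "real (card (Xs k \<inter> ball z (2 powr (- real_of_int k)))) \<le> c ^ 4"
    unfolding R using sep_finite(2)[OF sep r _ m] r by simp
qed

lemma lvl_sum:
  "(\<integral>\<^sup>+\<xi>. ennreal (a \<xi>) * indicator (hf_ball (k, \<xi>)) z \<partial>count_space (Xs k))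
     = (\<Sum>\<xi>\<in>Xs k \<inter> ball z (2 powr (- real_of_int k)). ennreal (a \<xi>))"
proof -
  have "(\<integral>\<^sup>+\<xi>. ennreal (a \<xi>) * indicator (hf_ball (k, \<xi>)) z \<partial>count_space (Xs k))
     = (\<Sum>\<xi>\<in>Xs k \<inter> ball z (2 powr (- real_of_int k)). ennreal (a \<xi>) * indicator (hf_ball (k, \<xi>)) z)"
    by (rule nn_integral_count_space'[OF ovl(1)]) (auto simp: hf_ball_eq dist_commute indicator_def)
  also have "\<dots> = (\<Sum>\<xi>\<in>Xs k \<inter> ball z (2 powr (- real_of_int k)). ennreal (a \<xi>))"
    by (intro sum.cong) (auto simp: hf_ball_eq dist_commute indicator_def)
  finally show ?thesis .
qed

lemma level_sum:
  "level_fun Xs u k z = (\<Sum>\<xi>\<in>Xs k \<inter> ball z (2 powr (- real_of_int k)). ennreal (norm (u (k, \<xi>))))"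
  unfolding level_fun_def by (rule lvl_sum)

lemma level_meas[measurable]: "level_fun Xs u k \<in> borel_measurable \<mu>"
proof -
  interpret sf: sigma_finite_measure "count_space (Xs k)"
    by (rule sigma_finite_measure_count_space_countable[OF countable_Xs])
  have "(\<lambda>p. ennreal (norm (u (k, snd p))) * indicator (hf_ball (k, snd p)) (fst p))
      \<in> borel_measurable (\<mu> \<Otimes>\<^sub>M count_space (Xs k))"
  proof (rule measurable_compose_countable'[where g = snd and I = "Xs k"
        and f = "\<lambda>\<xi> p. ennreal (norm (u (k, \<xi>))) * indicator (hf_ball (k, \<xi>)) (fst p)"])
    fix \<xi> assume "\<xi> \<in> Xs k"
    have "hf_ball (k, \<xi>) \<in> sets \<mu>" by (simp add: hf_ball_eq)
    then show "(\<lambda>p. ennreal (norm (u (k, \<xi>))) * indicator (hf_ball (k, \<xi>)) (fst p))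
      \<in> borel_measurable (\<mu> \<Otimes>\<^sub>M count_space (Xs k))"
      by measurable
  next
    show "snd \<in> \<mu> \<Otimes>\<^sub>M count_space (Xs k) \<rightarrow>\<^sub>M count_space (Xs k)" by measurable
  qed (rule countable_Xs)
  then show ?thesis
    unfolding level_fun_def by (intro sf.borel_measurable_nn_integral) (simp add: case_prod_beta)
qed

end

lemma lq_Lp: "lq_qnorm q a = Lp_qnorm (count_space UNIV) q a"
proof (cases "q = top")
  case True
  have "(SUP k. a k) = Inf {C. AE x in count_space UNIV. a x \<le> C}"
  proof (rule antisym)
    show "(SUP k. a k) \<le> Inf {C. AE x in count_space UNIV. a x \<le> C}"
      by (rule Inf_greatest) (auto simp: AE_count_space intro: SUP_least)
    show "Inf {C. AE x in count_space UNIV. a x \<le> C} \<le> (SUP k. a k)"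
      by (rule Inf_lower) (auto simp: AE_count_space intro: SUP_upper)
  qed
  then show ?thesis using True by (simp add: lq_qnorm_def Lp_qnorm_def ess_sup_enn_def)
next
  case False then show ?thesis by (simp add: lq_qnorm_def Lp_qnorm_def)
qed

lemma exps:
  assumes \<theta>: "0 < \<theta>" "\<theta> < 1" and p0: "0 < p0" and p1: "0 < p1"
    and pdef: "inverse p = ennreal (1 - \<theta>) * inverse p0 + ennreal \<theta> * inverse p1"
  shows "0 < p" "p = top \<Longrightarrow> p0 = top" "p = top \<Longrightarrow> p1 = top"
    "(1 - \<theta>) * (if p = top then 1 else enn2real p * enn2real (inverse p0))
      + \<theta> * (if p = top then 1 else enn2real p * enn2real (inverse p1)) = 1"
    "0 \<le> (if p = top then 1 else enn2real p * enn2real (inverse p0))"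
    "0 \<le> (if p = top then 1 else enn2real p * enn2real (inverse p1))"
proof -
  define i0 where "i0 = enn2real (inverse p0)"
  define i1 where "i1 = enn2real (inverse p1)"
  have i0: "inverse p0 = ennreal i0" "i0 = (if p0 = top then 0 else 1 / enn2real p0)"
    using inv_real[OF p0] by (simp_all add: i0_def)
  have i1: "inverse p1 = ennreal i1" "i1 = (if p1 = top then 0 else 1 / enn2real p1)"
    using inv_real[OF p1] by (simp_all add: i1_def)
  have i0p: "0 \<le> i0" using i0(2) by simp
  have i1p: "0 \<le> i1" using i1(2) by simp
  have ip: "inverse p = ennreal ((1 - \<theta>) * i0 + \<theta> * i1)"
    using pdef i0 i1 \<theta> i0p i1p by (simp add: ennreal_mult ennreal_plus)
  have pnz: "p \<noteq> 0" using ip by auto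
  show ppos: "0 < p" using pnz by (metis not_gr_zero)
  have top: "p0 = top \<and> p1 = top" if "p = top"
  proof -
    have "ennreal ((1 - \<theta>) * i0 + \<theta> * i1) = 0" using ip that by simp
    then have s0: "(1 - \<theta>) * i0 + \<theta> * i1 \<le> 0" by (metis ennreal_eq_0_iff)
    have h1: "0 \<le> (1 - \<theta>) * i0" "0 \<le> \<theta> * i1" using \<theta> i0p i1p by simp_all
    have "(1 - \<theta>) * i0 = 0" "\<theta> * i1 = 0" using s0 h1 by linarith+
    then have "i0 = 0" "i1 = 0" using \<theta> by simp_all
    then show "p0 = top \<and> p1 = top" using i0 i1 p0 p1 enn2real_pos
      by (metis divide_eq_0_iff less_numeral_extra(3) one_neq_zero)
  qed
  then show "p = top \<Longrightarrow> p0 = top" "p = top \<Longrightarrow> p1 = top" by auto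
  show "0 \<le> (if p = top then 1 else enn2real p * enn2real (inverse p0))" by simp
  show "0 \<le> (if p = top then 1 else enn2real p * enn2real (inverse p1))" by simp
  show "(1 - \<theta>) * (if p = top then 1 else enn2real p * enn2real (inverse p0))
      + \<theta> * (if p = top then 1 else enn2real p * enn2real (inverse p1)) = 1"
  proof (cases "p = top")
    case True then show ?thesis by simp
  next
    case pfin: False
    define P where "P = enn2real p"
    have P: "0 < P" using enn2real_pos[OF ppos pfin] by (simp add: P_def)
    have "ennreal (1 / P) = ennreal ((1 - \<theta>) * i0 + \<theta> * i1)"
      using ip inverse_fin[of p] pfin ppos by (simp add: P_def)
    then have iP: "1 / P = (1 - \<theta>) * i0 + \<theta> * i1"
      using P \<theta> i0p i1p by (subst (asm) ennreal_inj) auto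
    have "(1 - \<theta>) * (P * i0) + \<theta> * (P * i1) = P * ((1 - \<theta>) * i0 + \<theta> * i1)"
      by (simp add: algebra_simps)
    also have "\<dots> = 1" using P by (simp flip: iP)
    finally show ?thesis using pfin by (simp add: P_def i0_def i1_def)
  qed
qed

lemma count_single: "a k \<le> (\<integral>\<^sup>+ x. a x \<partial>count_space UNIV)"
proof -
  have "(\<integral>\<^sup>+ x. a k * indicator {k} x \<partial>count_space UNIV) \<le> (\<integral>\<^sup>+ x. a x \<partial>count_space UNIV)"
    by (intro nn_integral_mono) (auto simp: indicator_def)
  then show ?thesis by (simp add: nn_integral_cmult_indicator)
qed

lemma lq_fin_each:
  assumes "lq_qnorm q a \<noteq> top"
  shows "a k \<noteq> top"
proof (cases "q = top")
  case True
  have le: "a k \<le> (SUP k. a k)" by (rule SUP_upper) simp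
  have "(SUP k. a k) \<noteq> top" using assms True by (simp add: lq_qnorm_def)
  then show ?thesis using le by (rule neq_top_trans)
next
  case False
  have "epow (\<integral>\<^sup>+ k. epow (a k) (enn2real q) \<partial>count_space UNIV) (1 / enn2real q) \<noteq> top"
    using assms False by (simp add: lq_qnorm_def)
  then have "(\<integral>\<^sup>+ k. epow (a k) (enn2real q) \<partial>count_space UNIV) \<noteq> top" by (simp add: epow_eq_top_iff)
  moreover have "epow (a k) (enn2real q) \<le> (\<integral>\<^sup>+ k. epow (a k) (enn2real q) \<partial>count_space UNIV)"
    by (rule count_single)
  ultimately have "epow (a k) (enn2real q) \<noteq> top" by (auto simp: top_unique)
  then show ?thesis by (simp add: epow_eq_top_iff)
qed

lemma lq_zero_each:
  assumes q: "0 < q" and z: "lq_qnorm q a = 0"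
  shows "a k = 0"
proof -
  have "AE x in count_space UNIV. a x = 0"
    by (rule Lp_zero_AE[OF _ q]) (use z in \<open>simp_all add: lq_Lp\<close>)
  then show ?thesis by (simp add: AE_count_space)
qed

context hfd
begin

lemma level_scale:
  assumes t: "0 \<le> t"
  shows "level_fun Xs (\<lambda>x. complex_of_real t * g x) k z = ennreal t * level_fun Xs g k z"
proof -
  have "level_fun Xs (\<lambda>x. complex_of_real t * g x) k z
     = (\<integral>\<^sup>+ \<xi>. ennreal t * (ennreal (norm (g (k, \<xi>))) * indicator (hf_ball (k, \<xi>)) z) \<partial>count_space (Xs k))"
    unfolding level_fun_def using t by (intro nn_integral_cong) (simp add: norm_mult ennreal_mult mult.assoc)
  also have "\<dots> = ennreal t * level_fun Xs g k z"
    unfolding level_fun_def by (rule nn_integral_cmult) simp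
  finally show ?thesis .
qed

lemma I_scale:
  assumes t: "0 \<le> t" and p: "0 < p" and q: "0 < q"
  shows "I_qnorm \<mu> Xs s p q (\<lambda>x. complex_of_real t * g x) \<le> ennreal t * I_qnorm \<mu> Xs s p q g"
proof -
  have "I_qnorm \<mu> Xs s p q (\<lambda>x. complex_of_real t * g x)
      = lq_qnorm q (\<lambda>k. ennreal (2 powr (real_of_int k * s)) * Lp_qnorm \<mu> p (\<lambda>z. ennreal t * level_fun Xs g k z))"
  proof -
    have lf: "level_fun Xs (\<lambda>x. complex_of_real t * g x) k = (\<lambda>z. ennreal t * level_fun Xs g k z)" for k
      by (rule ext) (rule level_scale[OF t])
    show ?thesis unfolding I_qnorm_def lf ..
  qed
  also have "\<dots> \<le> lq_qnorm q (\<lambda>k. ennreal t * (ennreal (2 powr (real_of_int k * s)) * Lp_qnorm \<mu> p (level_fun Xs g k)))"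
    unfolding lq_Lp
  proof (rule Lp_mono)
    fix k
    have "Lp_qnorm \<mu> p (\<lambda>z. ennreal t * level_fun Xs g k z) \<le> ennreal t * Lp_qnorm \<mu> p (level_fun Xs g k)"
      using t p by (intro Lp_cmult) simp_all
    then have "ennreal (2 powr (real_of_int k * s)) * Lp_qnorm \<mu> p (\<lambda>z. ennreal t * level_fun Xs g k z)
        \<le> ennreal (2 powr (real_of_int k * s)) * (ennreal t * Lp_qnorm \<mu> p (level_fun Xs g k))"
      by (rule mult_left_mono) simp
    then show "ennreal (2 powr (real_of_int k * s)) * Lp_qnorm \<mu> p (\<lambda>z. ennreal t * level_fun Xs g k z)
        \<le> ennreal t * (ennreal (2 powr (real_of_int k * s)) * Lp_qnorm \<mu> p (level_fun Xs g k))"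
      by (simp add: ac_simps)
  qed
  also have "\<dots> \<le> ennreal t * I_qnorm \<mu> Xs s p q g"
    unfolding I_qnorm_def lq_Lp using t q by (intro Lp_cmult) simp_all
  finally show ?thesis .
qed

lemma pos_level:
  assumes p: "0 < p" and xi: "\<xi> \<in> Xs k" and nz: "u (k, \<xi>) \<noteq> 0"
  shows "Lp_qnorm \<mu> p (level_fun Xs u k) \<noteq> 0"
proof
  assume z: "Lp_qnorm \<mu> p (level_fun Xs u k) = 0"
  have ae: "AE x in \<mu>. level_fun Xs u k x = 0" by (rule Lp_zero_AE[OF level_meas p z])
  define B where "B = ball \<xi> (2 powr (- real_of_int k))"
  have "AE x in \<mu>. x \<notin> B"
    using ae
  proof eventually_elim
    case (elim x)
    show ?case
    proof
      assume xB: "x \<in> B"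
      then have "\<xi> \<in> Xs k \<inter> ball x (2 powr (- real_of_int k))" using xi by (simp add: B_def dist_commute)
      then have "ennreal (norm (u (k, \<xi>))) \<le> level_fun Xs u k x"
        unfolding level_sum by (intro member_le_sum ovl(1)) auto
      then show False using elim nz by simp
    qed
  qed
  moreover have Bsets: "B \<in> sets \<mu>" by (simp add: B_def)
  then have Bsp: "B \<subseteq> space \<mu>" by (rule sets.sets_into_space)
  then have eqB: "B = {x \<in> space \<mu>. \<not> (x \<notin> B)}" by auto
  have "(AE x in \<mu>. x \<notin> B) \<longleftrightarrow> emeasure \<mu> B = 0"
    by (rule AE_iff_measurable[OF Bsets eqB[symmetric]])
  ultimately have "emeasure \<mu> B = 0" by simp
  then show False using pos[of "2 powr (- real_of_int k)" \<xi>] by (simp add: B_def)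
qed

end

lemma one_holder_pdef: "0 < \<theta> \<Longrightarrow> \<theta> < 1 \<Longrightarrow> inverse (1::ennreal) = ennreal (1 - \<theta>) * inverse 1 + ennreal \<theta> * inverse 1"
  by (simp add: ennreal_plus[symmetric])

lemma Lp_one: "Lp_qnorm M 1 f = (\<integral>\<^sup>+ z. f z \<partial>M)"
  by (simp add: Lp_qnorm_def)

lemma pow2_split:
  assumes s_def: "s = (1 - \<theta>) * s0 + \<theta> * s1"
  shows "ennreal (2 powr (real_of_int k * s))
    = epow (ennreal (2 powr (real_of_int k * s0))) (1 - \<theta>) * epow (ennreal (2 powr (real_of_int k * s1))) \<theta>"
proof -
  have "(2::real) powr (real_of_int k * s) = 2 powr (real_of_int k * s0 * (1 - \<theta>) + real_of_int k * s1 * \<theta>)"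
    by (simp add: s_def algebra_simps)
  also have "\<dots> = (2 powr (real_of_int k * s0)) powr (1 - \<theta>) * (2 powr (real_of_int k * s1)) powr \<theta>"
    by (simp add: powr_add powr_powr)
  finally show ?thesis by (simp add: epow_ennreal ennreal_mult)
qed

context hfd
begin

lemma dir1_level:
  assumes \<theta>: "0 < \<theta>" "\<theta> < 1" and c0: "0 \<le> c0"
    and ineq: "\<forall>x\<in>hf_vertices Xs. norm (u x) \<le> c0 * norm (g x) powr (1 - \<theta>) * norm (h x) powr \<theta>"
  shows "level_fun Xs u k z \<le> ennreal c0 * (epow (level_fun Xs g k z) (1 - \<theta>) * epow (level_fun Xs h k z) \<theta>)"
proof -
  define G where "G \<xi> = ennreal (norm (g (k, \<xi>))) * indicator (hf_ball (k, \<xi>)) z" for \<xi>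
  define H where "H \<xi> = ennreal (norm (h (k, \<xi>))) * indicator (hf_ball (k, \<xi>)) z" for \<xi>
  have pt: "ennreal (norm (u (k, \<xi>))) * indicator (hf_ball (k, \<xi>)) z \<le> ennreal c0 * (epow (G \<xi>) (1 - \<theta>) * epow (H \<xi>) \<theta>)"
    if "\<xi> \<in> space (count_space (Xs k))" for \<xi>
  proof (cases "z \<in> hf_ball (k, \<xi>)")
    case True
    have "(k, \<xi>) \<in> hf_vertices Xs" using that by (simp add: hf_vertices_def)
    then have "norm (u (k, \<xi>)) \<le> c0 * norm (g (k, \<xi>)) powr (1 - \<theta>) * norm (h (k, \<xi>)) powr \<theta>" using ineq by blast
    then have "ennreal (norm (u (k, \<xi>))) \<le> ennreal (c0 * norm (g (k, \<xi>)) powr (1 - \<theta>) * norm (h (k, \<xi>)) powr \<theta>)"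
      by (rule ennreal_leI)
    also have "\<dots> = ennreal c0 * (epow (G \<xi>) (1 - \<theta>) * epow (H \<xi>) \<theta>)"
      using True c0 by (simp add: G_def H_def epow_ennreal ennreal_mult mult.assoc)
    finally show ?thesis using True by simp
  next
    case False then show ?thesis by simp
  qed
  have "level_fun Xs u k z \<le> (\<integral>\<^sup>+\<xi>. ennreal c0 * (epow (G \<xi>) (1 - \<theta>) * epow (H \<xi>) \<theta>) \<partial>count_space (Xs k))"
    unfolding level_fun_def by (rule nn_integral_mono) (rule pt)
  also have "\<dots> = ennreal c0 * (\<integral>\<^sup>+\<xi>. epow (G \<xi>) (1 - \<theta>) * epow (H \<xi>) \<theta> \<partial>count_space (Xs k))"
    by (rule nn_integral_cmult) simp
  also have "(\<integral>\<^sup>+\<xi>. epow (G \<xi>) (1 - \<theta>) * epow (H \<xi>) \<theta> \<partial>count_space (Xs k))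
      \<le> epow (Lp_qnorm (count_space (Xs k)) 1 G) (1 - \<theta>) * epow (Lp_qnorm (count_space (Xs k)) 1 H) \<theta>"
    using Lp_holder[of G "count_space (Xs k)" H \<theta> 1 1 1] \<theta> one_holder_pdef[OF \<theta>] by (simp add: Lp_one)
  also have "Lp_qnorm (count_space (Xs k)) 1 G = level_fun Xs g k z"
    by (simp add: Lp_one G_def level_fun_def)
  also have "Lp_qnorm (count_space (Xs k)) 1 H = level_fun Xs h k z"
    by (simp add: Lp_one H_def level_fun_def)
  finally show ?thesis by (simp add: mult_left_mono)
qed

lemma dir1:
  assumes \<theta>: "0 < \<theta>" "\<theta> < 1" and p0: "0 < p0" and q0: "0 < q0" and p1: "0 < p1" and q1: "0 < q1"
    and p_def: "inverse p = ennreal (1 - \<theta>) * inverse p0 + ennreal \<theta> * inverse p1"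
    and q_def: "inverse q = ennreal (1 - \<theta>) * inverse q0 + ennreal \<theta> * inverse q1"
    and s_def: "s = (1 - \<theta>) * s0 + \<theta> * s1"
    and c0: "0 \<le> c0"
    and Ng: "I_qnorm \<mu> Xs s0 p0 q0 g \<le> 1" and Nh: "I_qnorm \<mu> Xs s1 p1 q1 h \<le> 1"
    and ineq: "\<forall>x\<in>hf_vertices Xs. norm (u x) \<le> c0 * norm (g x) powr (1 - \<theta>) * norm (h x) powr \<theta>"
  shows "I_qnorm \<mu> Xs s p q u \<le> ennreal c0"
proof -
  have p: "0 < p" by (rule exps(1)[OF \<theta> p0 p1 p_def])
  have q: "0 < q" by (rule exps(1)[OF \<theta> q0 q1 q_def])
  define B0 where "B0 k = ennreal (2 powr (real_of_int k * s0)) * Lp_qnorm \<mu> p0 (level_fun Xs g k)" for k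
  define B1 where "B1 k = ennreal (2 powr (real_of_int k * s1)) * Lp_qnorm \<mu> p1 (level_fun Xs h k)" for k
  have step2: "Lp_qnorm \<mu> p (level_fun Xs u k)
      \<le> ennreal c0 * (epow (Lp_qnorm \<mu> p0 (level_fun Xs g k)) (1 - \<theta>) * epow (Lp_qnorm \<mu> p1 (level_fun Xs h k)) \<theta>)" for k
  proof -
    have "Lp_qnorm \<mu> p (level_fun Xs u k)
        \<le> Lp_qnorm \<mu> p (\<lambda>z. ennreal c0 * (epow (level_fun Xs g k z) (1 - \<theta>) * epow (level_fun Xs h k z) \<theta>))"
      by (rule Lp_mono) (rule dir1_level[OF \<theta> c0 ineq])
    also have "\<dots> \<le> ennreal c0 * Lp_qnorm \<mu> p (\<lambda>z. epow (level_fun Xs g k z) (1 - \<theta>) * epow (level_fun Xs h k z) \<theta>)"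
      by (rule Lp_cmult) (use c0 p in simp_all)
    also have "\<dots> \<le> ennreal c0 * (epow (Lp_qnorm \<mu> p0 (level_fun Xs g k)) (1 - \<theta>) * epow (Lp_qnorm \<mu> p1 (level_fun Xs h k)) \<theta>)"
      by (intro mult_left_mono Lp_holder[OF level_meas level_meas \<theta> p0 p1 p_def]) simp
    finally show ?thesis .
  qed
  have step3: "ennreal (2 powr (real_of_int k * s)) * Lp_qnorm \<mu> p (level_fun Xs u k)
      \<le> ennreal c0 * (epow (B0 k) (1 - \<theta>) * epow (B1 k) \<theta>)" for k
  proof -
    have "ennreal (2 powr (real_of_int k * s)) * Lp_qnorm \<mu> p (level_fun Xs u k)
      \<le> ennreal (2 powr (real_of_int k * s)) * (ennreal c0 * (epow (Lp_qnorm \<mu> p0 (level_fun Xs g k)) (1 - \<theta>) * epow (Lp_qnorm \<mu> p1 (level_fun Xs h k)) \<theta>))"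
      by (rule mult_left_mono[OF step2]) simp
    also have "\<dots> = ennreal c0 * (epow (B0 k) (1 - \<theta>) * epow (B1 k) \<theta>)"
      unfolding pow2_split[OF s_def] B0_def B1_def epow_mult by (simp add: ac_simps)
    finally show ?thesis .
  qed
  have "I_qnorm \<mu> Xs s p q u \<le> lq_qnorm q (\<lambda>k. ennreal c0 * (epow (B0 k) (1 - \<theta>) * epow (B1 k) \<theta>))"
    unfolding I_qnorm_def lq_Lp by (rule Lp_mono) (rule step3)
  also have "\<dots> \<le> ennreal c0 * lq_qnorm q (\<lambda>k. epow (B0 k) (1 - \<theta>) * epow (B1 k) \<theta>)"
    unfolding lq_Lp by (rule Lp_cmult) (use c0 q in simp_all)
  also have "\<dots> \<le> ennreal c0 * (epow (lq_qnorm q0 B0) (1 - \<theta>) * epow (lq_qnorm q1 B1) \<theta>)"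
    unfolding lq_Lp by (intro mult_left_mono Lp_holder[OF _ _ \<theta> q0 q1 q_def]) simp_all
  also have "\<dots> \<le> ennreal c0 * (1 * 1)"
  proof -
    have "lq_qnorm q0 B0 \<le> 1" using Ng by (simp add: I_qnorm_def B0_def[abs_def])
    moreover have "lq_qnorm q1 B1 \<le> 1" using Nh by (simp add: I_qnorm_def B1_def[abs_def])
    ultimately show ?thesis using \<theta> by (intro mult_left_mono mult_mono epow_le_one) auto
  qed
  finally show ?thesis by simp
qed

end

lemma key_real:
  fixes N b Ar \<Lambda> \<theta> \<alpha> \<beta> g0 g1 s s0 s1 kk :: real
  assumes N: "0 < N" and b: "0 < b" and Ar: "0 < Ar" and L: "0 < \<Lambda>"
    and ab: "(1 - \<theta>) * \<alpha> + \<theta> * \<beta> = 1" and gg: "(1 - \<theta>) * g0 + \<theta> * g1 = 1"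
    and s_def: "s = (1 - \<theta>) * s0 + \<theta> * s1"
    and b_def: "b = 2 powr (kk * s) * Ar / \<Lambda>"
  shows "(N powr \<alpha> * (b powr g0 * 2 powr (- (kk * s0)) / Ar powr \<alpha>)) powr (1 - \<theta>)
       * (N powr \<beta> * (b powr g1 * 2 powr (- (kk * s1)) / Ar powr \<beta>)) powr \<theta> = N / \<Lambda>"
    (is "?L = ?R")
proof -
  have Lpos: "0 < ?L" using N b Ar by simp
  have Rpos: "0 < ?R" using N L by simp
  define LN where "LN = ln N"
  define LB where "LB = ln b"
  define LA where "LA = ln Ar"
  define L2 where "L2 = ln (2::real)"
  have lnb: "LB = kk * s * L2 + LA - ln \<Lambda>"
    unfolding LB_def LA_def L2_def b_def using Ar L by (simp add: ln_mult ln_div)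
  have "ln ?L = (1 - \<theta>) * (\<alpha> * LN + (g0 * LB - kk * s0 * L2) - \<alpha> * LA)
       + \<theta> * (\<beta> * LN + (g1 * LB - kk * s1 * L2) - \<beta> * LA)"
    unfolding LN_def LB_def LA_def L2_def using N b Ar by (simp add: ln_mult ln_div)
  also have "\<dots> = ((1 - \<theta>) * \<alpha> + \<theta> * \<beta>) * LN + ((1 - \<theta>) * g0 + \<theta> * g1) * LB
       - ((1 - \<theta>) * s0 + \<theta> * s1) * kk * L2 - ((1 - \<theta>) * \<alpha> + \<theta> * \<beta>) * LA"
    by (simp add: algebra_simps)
  also have "\<dots> = LN + LB - s * kk * L2 - LA" by (simp only: ab gg s_def[symmetric] mult_1_left)
  also have "\<dots> = LN - ln \<Lambda>" by (simp add: lnb algebra_simps)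
  also have "\<dots> = ln ?R" using N L by (simp add: LN_def ln_div)
  finally show ?thesis using Lpos Rpos by simp
qed


lemma I_zero: "I_qnorm \<mu> Xs s p q (\<lambda>_. 0) = 0"
proof -
  have "level_fun Xs (\<lambda>_. 0) k = (\<lambda>_. 0)" for k by (rule ext) (simp add: level_fun_def)
  then show ?thesis by (simp add: I_qnorm_def Lp_zero lq_Lp)
qed

context hfd
begin

lemma fbound:
  fixes b :: "int \<Rightarrow> real" and w :: "int \<Rightarrow> real"
  assumes p: "0 < p" and p0: "0 < p0" and ptop: "p = top \<Longrightarrow> p0 = top"
    and q: "0 < q" and q0: "0 < q0" and qtop: "q = top \<Longrightarrow> q0 = top"
    and \<alpha>_def: "\<alpha> = (if p = top then 1 else enn2real p * enn2real (inverse p0))"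
    and \<gamma>_def: "\<gamma> = (if q = top then 1 else enn2real q * enn2real (inverse q0))"
    and Afin: "\<And>k. Lp_qnorm \<mu> p (level_fun Xs u k) \<noteq> top"
    and bnn: "\<And>k. 0 \<le> b k"
    and lqb: "lq_qnorm q (\<lambda>k. ennreal (b k)) \<le> 1"
    and w_def: "\<And>k. w k = (if enn2real (Lp_qnorm \<mu> p (level_fun Xs u k)) = 0 then 0
          else b k powr \<gamma> * 2 powr (- (real_of_int k * s0)) / enn2real (Lp_qnorm \<mu> p (level_fun Xs u k)) powr \<alpha>)"
    and g_def: "g = (\<lambda>x. if snd x \<in> Xs (fst x) then complex_of_real (norm (u x) powr \<alpha> * w (fst x)) else 0)"
  shows "I_qnorm \<mu> Xs s0 p0 q0 g \<le> ennreal (max 1 (c ^ 4))"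
proof -
  define K where "K = max 1 (c ^ 4)"
  have K1: "1 \<le> K" and Kc: "c ^ 4 \<le> K" by (simp_all add: K_def)
  define A where "A k = Lp_qnorm \<mu> p (level_fun Xs u k)" for k
  define Ar where "Ar k = enn2real (A k)" for k
  have AAr: "A k = ennreal (Ar k)" for k using Afin[of k] by (simp add: Ar_def A_def ennreal_enn2real_if)
  have Arnn: "0 \<le> Ar k" for k by (simp add: Ar_def)
  have \<alpha>0: "0 \<le> \<alpha>" and \<gamma>0: "0 \<le> \<gamma>" by (simp_all add: \<alpha>_def \<gamma>_def)
  have wnn: "0 \<le> w k" for k using bnn[of k] Arnn[of k] by (simp add: w_def Ar_def[symmetric] A_def[symmetric])
  have lg: "level_fun Xs g k z \<le> ennreal (w k * K) * epow (level_fun Xs u k z) \<alpha>" for k z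
  proof -
    define F where "F = Xs k \<inter> ball z (2 powr (- real_of_int k))"
    have Ffin: "finite F" and Fcard: "real (card F) \<le> c ^ 4" using ovl[of k z] by (simp_all add: F_def)
    have "level_fun Xs g k z = (\<Sum>\<xi>\<in>F. ennreal (norm (u (k, \<xi>)) powr \<alpha> * w k))"
      unfolding level_sum F_def[symmetric]
    proof (rule sum.cong)
      fix \<xi> assume "\<xi> \<in> F"
      then have "\<xi> \<in> Xs k" by (simp add: F_def)
      then show "ennreal (norm (g (k, \<xi>))) = ennreal (norm (u (k, \<xi>)) powr \<alpha> * w k)"
        using wnn[of k] by (simp add: g_def norm_mult abs_of_nonneg)
    qed simp
    also have "\<dots> = ennreal (w k * (\<Sum>\<xi>\<in>F. norm (u (k, \<xi>)) powr \<alpha>))"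
      using wnn[of k] by (simp add: sum_distrib_left mult.commute)
    also have "\<dots> \<le> ennreal (w k * K * (\<Sum>\<xi>\<in>F. norm (u (k, \<xi>))) powr \<alpha>)"
    proof (rule ennreal_leI)
      have "(\<Sum>\<xi>\<in>F. norm (u (k, \<xi>)) powr \<alpha>) \<le> real (card F) * (\<Sum>\<xi>\<in>F. norm (u (k, \<xi>))) powr \<alpha>"
        by (rule real_pow_sum_bound[OF Ffin _ \<alpha>0]) simp
      also have "\<dots> \<le> K * (\<Sum>\<xi>\<in>F. norm (u (k, \<xi>))) powr \<alpha>"
        using Fcard Kc by (intro mult_right_mono) auto
      finally show "w k * (\<Sum>\<xi>\<in>F. norm (u (k, \<xi>)) powr \<alpha>) \<le> w k * K * (\<Sum>\<xi>\<in>F. norm (u (k, \<xi>))) powr \<alpha>"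
        using wnn[of k] by (simp add: mult.assoc mult_left_mono)
    qed
    also have "\<dots> = ennreal (w k * K) * epow (level_fun Xs u k z) \<alpha>"
      unfolding level_sum F_def[symmetric] using wnn[of k] K1
      by (simp add: epow_ennreal sum_nonneg ennreal_mult)
    finally show ?thesis .
  qed
  have Lpg: "Lp_qnorm \<mu> p0 (level_fun Xs g k) \<le> ennreal (w k * K) * epow (A k) \<alpha>" for k
  proof -
    have "Lp_qnorm \<mu> p0 (level_fun Xs g k) \<le> Lp_qnorm \<mu> p0 (\<lambda>z. ennreal (w k * K) * epow (level_fun Xs u k z) \<alpha>)"
      by (rule Lp_mono) (rule lg)
    also have "\<dots> \<le> ennreal (w k * K) * Lp_qnorm \<mu> p0 (\<lambda>z. epow (level_fun Xs u k z) \<alpha>)"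
      by (rule Lp_cmult) (use wnn[of k] K1 p0 in simp_all)
    also have "\<dots> \<le> ennreal (w k * K) * epow (A k) \<alpha>"
      unfolding A_def \<alpha>_def by (rule mult_left_mono[OF Lp_pow[OF level_meas p0 p]]) (simp_all add: ptop)
    finally show ?thesis .
  qed
  have bk: "ennreal (2 powr (real_of_int k * s0)) * Lp_qnorm \<mu> p0 (level_fun Xs g k) \<le> ennreal K * epow (ennreal (b k)) \<gamma>" for k
  proof (cases "Ar k = 0")
    case True
    then have "w k = 0" by (simp add: w_def Ar_def[symmetric] A_def[symmetric])
    then have "Lp_qnorm \<mu> p0 (level_fun Xs g k) \<le> 0" using Lpg[of k] by simp
    then show ?thesis by simp
  next
    case False
    then have Arp: "0 < Ar k" using Arnn[of k] by simp
    have wk: "w k = b k powr \<gamma> * 2 powr (- (real_of_int k * s0)) / Ar k powr \<alpha>"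
      using False by (simp add: w_def Ar_def[symmetric] A_def[symmetric])
    have "ennreal (2 powr (real_of_int k * s0)) * Lp_qnorm \<mu> p0 (level_fun Xs g k)
        \<le> ennreal (2 powr (real_of_int k * s0)) * (ennreal (w k * K) * epow (A k) \<alpha>)"
      by (rule mult_left_mono[OF Lpg]) simp
    also have "\<dots> = ennreal (2 powr (real_of_int k * s0) * (w k * K) * Ar k powr \<alpha>)"
      unfolding AAr using wnn[of k] K1 Arnn[of k] by (simp add: epow_ennreal ennreal_mult mult.assoc)
    also have "2 powr (real_of_int k * s0) * (w k * K) * Ar k powr \<alpha> = K * b k powr \<gamma>"
    proof -
      have "(2::real) powr (real_of_int k * s0) * 2 powr (- (real_of_int k * s0)) = 1"
        by (simp add: powr_add[symmetric])
      moreover have "0 < Ar k powr \<alpha>" using Arp by simp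
      ultimately show ?thesis unfolding wk by (simp add: field_simps)
    qed
    also have "ennreal (K * b k powr \<gamma>) = ennreal K * epow (ennreal (b k)) \<gamma>"
      using K1 bnn[of k] by (simp add: epow_ennreal ennreal_mult)
    finally show ?thesis .
  qed
  have "I_qnorm \<mu> Xs s0 p0 q0 g \<le> lq_qnorm q0 (\<lambda>k. ennreal K * epow (ennreal (b k)) \<gamma>)"
    unfolding I_qnorm_def lq_Lp by (rule Lp_mono) (rule bk)
  also have "\<dots> \<le> ennreal K * lq_qnorm q0 (\<lambda>k. epow (ennreal (b k)) \<gamma>)"
    unfolding lq_Lp by (rule Lp_cmult) (use K1 q0 in simp_all)
  also have "\<dots> \<le> ennreal K * epow (lq_qnorm q (\<lambda>k. ennreal (b k))) \<gamma>"
    unfolding lq_Lp \<gamma>_def by (intro mult_left_mono Lp_pow[OF _ q0 q qtop]) simp_all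
  also have "\<dots> \<le> ennreal K * 1"
    using lqb \<gamma>0 unfolding lq_Lp by (intro mult_left_mono epow_le_one) simp_all
  finally show ?thesis by (simp add: K_def)
qed

end

context hfd
begin

lemma dir2:
  assumes \<theta>: "0 < \<theta>" "\<theta> < 1" and p0: "0 < p0" and q0: "0 < q0" and p1: "0 < p1" and q1: "0 < q1"
    and p_def: "inverse p = ennreal (1 - \<theta>) * inverse p0 + ennreal \<theta> * inverse p1"
    and q_def: "inverse q = ennreal (1 - \<theta>) * inverse q0 + ennreal \<theta> * inverse q1"
    and s_def: "s = (1 - \<theta>) * s0 + \<theta> * s1"
    and Iu: "I_qnorm \<mu> Xs s p q u = ennreal \<Lambda>" and L: "0 < \<Lambda>"
  shows "calderon_qnorm Xs (I_qnorm \<mu> Xs s0 p0 q0) (I_qnorm \<mu> Xs s1 p1 q1) \<theta> u \<le> ennreal (max 1 (c ^ 4) * \<Lambda>)"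
proof -
  note pe = exps[OF \<theta> p0 p1 p_def]
  note qe = exps[OF \<theta> q0 q1 q_def]
  define K where "K = max 1 (c ^ 4)"
  have K1: "1 \<le> K" by (simp add: K_def)
  define \<alpha> where "\<alpha> = (if p = top then 1 else enn2real p * enn2real (inverse p0))"
  define \<beta> where "\<beta> = (if p = top then 1 else enn2real p * enn2real (inverse p1))"
  define \<gamma>0 where "\<gamma>0 = (if q = top then 1 else enn2real q * enn2real (inverse q0))"
  define \<gamma>1 where "\<gamma>1 = (if q = top then 1 else enn2real q * enn2real (inverse q1))"
  have ab: "(1 - \<theta>) * \<alpha> + \<theta> * \<beta> = 1" using pe(4) by (simp add: \<alpha>_def \<beta>_def)
  have gg: "(1 - \<theta>) * \<gamma>0 + \<theta> * \<gamma>1 = 1" using qe(4) by (simp add: \<gamma>0_def \<gamma>1_def)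
  define A where "A k = Lp_qnorm \<mu> p (level_fun Xs u k)" for k
  define a where "a k = ennreal (2 powr (real_of_int k * s)) * A k" for k
  have lqa: "lq_qnorm q a = ennreal \<Lambda>" using Iu by (simp add: I_qnorm_def a_def[abs_def] A_def[abs_def])
  have Afin: "A k \<noteq> top" for k
  proof -
    have "a k \<noteq> top" by (rule lq_fin_each[of q]) (simp add: lqa)
    then show ?thesis by (auto simp: a_def ennreal_mult_eq_top_iff)
  qed
  define Ar where "Ar k = enn2real (A k)" for k
  have AAr: "A k = ennreal (Ar k)" for k using Afin[of k] by (simp add: Ar_def ennreal_enn2real_if)
  have Arnn: "0 \<le> Ar k" for k by (simp add: Ar_def)
  define b where "b k = 2 powr (real_of_int k * s) * Ar k / \<Lambda>" for k
  have bnn: "0 \<le> b k" for k using Arnn[of k] L by (simp add: b_def)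
  have eb: "ennreal (b k) = ennreal (1 / \<Lambda>) * a k" for k
    unfolding b_def a_def AAr using Arnn[of k] L by (simp add: ennreal_mult[symmetric] del: ennreal_mult)
  have lqb: "lq_qnorm q (\<lambda>k. ennreal (b k)) \<le> 1"
  proof -
    have "lq_qnorm q (\<lambda>k. ennreal (b k)) = lq_qnorm q (\<lambda>k. ennreal (1 / \<Lambda>) * a k)" by (simp add: eb)
    also have "\<dots> \<le> ennreal (1 / \<Lambda>) * lq_qnorm q a"
      unfolding lq_Lp by (rule Lp_cmult) (use L pe qe in simp_all)
    also have "\<dots> = 1" using L by (simp add: lqa ennreal_mult[symmetric] del: ennreal_mult)
    finally show ?thesis .
  qed
  define w where "w k = (if enn2real (Lp_qnorm \<mu> p (level_fun Xs u k)) = 0 then 0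
          else b k powr \<gamma>0 * 2 powr (- (real_of_int k * s0)) / enn2real (Lp_qnorm \<mu> p (level_fun Xs u k)) powr \<alpha>)" for k
  define v where "v k = (if enn2real (Lp_qnorm \<mu> p (level_fun Xs u k)) = 0 then 0
          else b k powr \<gamma>1 * 2 powr (- (real_of_int k * s1)) / enn2real (Lp_qnorm \<mu> p (level_fun Xs u k)) powr \<beta>)" for k
  define g where "g = (\<lambda>x. if snd x \<in> Xs (fst x) then complex_of_real (norm (u x) powr \<alpha> * w (fst x)) else 0)"
  define h where "h = (\<lambda>x. if snd x \<in> Xs (fst x) then complex_of_real (norm (u x) powr \<beta> * v (fst x)) else 0)"
  have Afin': "\<And>k. Lp_qnorm \<mu> p (level_fun Xs u k) \<noteq> top" using Afin by (simp add: A_def)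
  have Ng: "I_qnorm \<mu> Xs s0 p0 q0 g \<le> ennreal K"
    unfolding K_def by (rule fbound[OF pe(1) p0 pe(2) qe(1) q0 qe(2) \<alpha>_def \<gamma>0_def Afin' bnn lqb w_def g_def])
  have Nh: "I_qnorm \<mu> Xs s1 p1 q1 h \<le> ennreal K"
    unfolding K_def by (rule fbound[OF pe(1) p1 pe(3) qe(1) q1 qe(3) \<beta>_def \<gamma>1_def Afin' bnn lqb v_def h_def])
  define g' where "g' = (\<lambda>x. complex_of_real (1 / K) * g x)"
  define h' where "h' = (\<lambda>x. complex_of_real (1 / K) * h x)"
  have Ng': "I_qnorm \<mu> Xs s0 p0 q0 g' \<le> 1"
  proof -
    have "I_qnorm \<mu> Xs s0 p0 q0 g' \<le> ennreal (1 / K) * I_qnorm \<mu> Xs s0 p0 q0 g"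
      unfolding g'_def by (rule I_scale) (use K1 p0 q0 in simp_all)
    also have "\<dots> \<le> ennreal (1 / K) * ennreal K" by (rule mult_left_mono[OF Ng]) simp
    also have "\<dots> = 1" using K1 by (simp add: ennreal_mult[symmetric] del: ennreal_mult)
    finally show ?thesis .
  qed
  have Nh': "I_qnorm \<mu> Xs s1 p1 q1 h' \<le> 1"
  proof -
    have "I_qnorm \<mu> Xs s1 p1 q1 h' \<le> ennreal (1 / K) * I_qnorm \<mu> Xs s1 p1 q1 h"
      unfolding h'_def by (rule I_scale) (use K1 p1 q1 in simp_all)
    also have "\<dots> \<le> ennreal (1 / K) * ennreal K" by (rule mult_left_mono[OF Nh]) simp
    also have "\<dots> = 1" using K1 by (simp add: ennreal_mult[symmetric] del: ennreal_mult)
    finally show ?thesis .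
  qed
  have g'f: "g' \<in> hf_funs Xs" by (auto simp: hf_funs_def hf_vertices_def g'_def g_def)
  have h'f: "h' \<in> hf_funs Xs" by (auto simp: hf_funs_def hf_vertices_def h'_def h_def)
  have ineq: "\<forall>x\<in>hf_vertices Xs. norm (u x) \<le> (K * \<Lambda>) * norm (g' x) powr (1 - \<theta>) * norm (h' x) powr \<theta>"
  proof
    fix x assume "x \<in> hf_vertices Xs"
    then obtain k \<xi> where x: "x = (k, \<xi>)" and xi: "\<xi> \<in> Xs k" by (auto simp: hf_vertices_def)
    show "norm (u x) \<le> (K * \<Lambda>) * norm (g' x) powr (1 - \<theta>) * norm (h' x) powr \<theta>"
    proof (cases "u (k, \<xi>) = 0")
      case True then show ?thesis using x K1 L by simp
    next
      case False
      define N where "N = norm (u (k, \<xi>))"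
      have N: "0 < N" using False by (simp add: N_def)
      have "A k \<noteq> 0" unfolding A_def by (rule pos_level[where u = u, OF pe(1) xi False])
      then have Arp: "0 < Ar k" using AAr[of k] Arnn[of k] by (cases "Ar k = 0") auto
      have bp: "0 < b k" using Arp L by (simp add: b_def)
      have wk: "w k = b k powr \<gamma>0 * 2 powr (- (real_of_int k * s0)) / Ar k powr \<alpha>"
        using Arp by (simp add: w_def Ar_def[symmetric] A_def[symmetric])
      have vk: "v k = b k powr \<gamma>1 * 2 powr (- (real_of_int k * s1)) / Ar k powr \<beta>"
        using Arp by (simp add: v_def Ar_def[symmetric] A_def[symmetric])
      have wpos: "0 \<le> w k" "0 \<le> v k" using bp Arp by (simp_all add: wk vk)
      have K0: "0 \<le> K" using K1 by simp
      have ng: "norm (g' x) = 1 / K * (N powr \<alpha> * w k)"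
        using xi wpos K0 by (simp add: x g'_def g_def N_def norm_mult norm_divide abs_of_nonneg abs_of_nonneg[OF K0])
      have nh: "norm (h' x) = 1 / K * (N powr \<beta> * v k)"
        using xi wpos K0 by (simp add: x h'_def h_def N_def norm_mult norm_divide abs_of_nonneg abs_of_nonneg[OF K0])
      have key: "(N powr \<alpha> * w k) powr (1 - \<theta>) * (N powr \<beta> * v k) powr \<theta> = N / \<Lambda>"
        unfolding wk vk by (rule key_real[OF N bp Arp L ab gg s_def b_def])
      have KK: "(1 / K) powr (1 - \<theta>) * (1 / K) powr \<theta> = 1 / K"
        using K0 by (simp add: powr_add[symmetric])
      have e1: "norm (g' x) powr (1 - \<theta>) = (1 / K) powr (1 - \<theta>) * (N powr \<alpha> * w k) powr (1 - \<theta>)"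
        unfolding ng by (rule powr_mult; use K0 wpos in simp)
      have e2: "norm (h' x) powr \<theta> = (1 / K) powr \<theta> * (N powr \<beta> * v k) powr \<theta>"
        unfolding nh by (rule powr_mult; use K0 wpos in simp)
      have "(K * \<Lambda>) * norm (g' x) powr (1 - \<theta>) * norm (h' x) powr \<theta>
          = (K * \<Lambda>) * ((1 / K) powr (1 - \<theta>) * (N powr \<alpha> * w k) powr (1 - \<theta>))
             * ((1 / K) powr \<theta> * (N powr \<beta> * v k) powr \<theta>)"
        unfolding e1 e2 ..
      also have "\<dots> = (K * \<Lambda>) * ((1 / K) powr (1 - \<theta>) * (1 / K) powr \<theta>)
             * ((N powr \<alpha> * w k) powr (1 - \<theta>) * (N powr \<beta> * v k) powr \<theta>)"
        by (simp only: mult_ac)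
      also have "\<dots> = (K * \<Lambda>) * (1 / K) * (N / \<Lambda>)" unfolding KK key ..
      also have "\<dots> = N" using K1 L by simp
      finally show ?thesis by (simp add: x N_def)
    qed
  qed
  have P: "0 < K * \<Lambda> \<and> (\<exists>g h. g \<in> hf_funs Xs \<and> h \<in> hf_funs Xs \<and> I_qnorm \<mu> Xs s0 p0 q0 g \<le> 1
      \<and> I_qnorm \<mu> Xs s1 p1 q1 h \<le> 1
      \<and> (\<forall>x\<in>hf_vertices Xs. norm (u x) \<le> (K * \<Lambda>) * norm (g x) powr (1 - \<theta>) * norm (h x) powr \<theta>))"
    using K1 L g'f h'f Ng' Nh' ineq by auto
  show ?thesis unfolding calderon_qnorm_def K_def[symmetric]
    by (rule Inf_lower) (use P in blast)
qed

lemma dir2_zero: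
  assumes p: "0 < p" and q: "0 < q" and Iu: "I_qnorm \<mu> Xs s p q u = 0"
    and that: "0 < e" "N0 (\<lambda>_. 0) \<le> 1" "N1 (\<lambda>_. 0) \<le> 1"
  shows "calderon_qnorm Xs N0 N1 \<theta> u \<le> ennreal e"
proof -
  have uz: "u x = 0" if xv: "x \<in> hf_vertices Xs" for x
  proof -
    obtain k \<xi> where x: "x = (k, \<xi>)" and xi: "\<xi> \<in> Xs k" using xv by (auto simp: hf_vertices_def)
    have "ennreal (2 powr (real_of_int k * s)) * Lp_qnorm \<mu> p (level_fun Xs u k) = 0"
      using lq_zero_each[OF q] Iu unfolding I_qnorm_def by blast
    then have "Lp_qnorm \<mu> p (level_fun Xs u k) = 0" by simp
    then show ?thesis using pos_level[where u = u, OF p xi] x by blast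
  qed
  have "(\<exists>g h. g \<in> hf_funs Xs \<and> h \<in> hf_funs Xs \<and> N0 g \<le> 1 \<and> N1 h \<le> 1 \<and>
           (\<forall>x\<in>hf_vertices Xs. norm (u x) \<le> e * norm (g x) powr (1 - \<theta>) * norm (h x) powr \<theta>))"
    by (rule exI[of _ "\<lambda>_. 0"], rule exI[of _ "\<lambda>_. 0"]) (use that uz in \<open>simp add: hf_funs_def\<close>)
  then show ?thesis unfolding calderon_qnorm_def
    by (intro Inf_lower) (use that in blast)
qed

end

theorem proposition4p1:
  fixes \<mu> :: "'a::metric_space measure"
    and Xs :: "int \<Rightarrow> 'a set"
    and s0 s1 \<theta> :: real
    and p0 q0 p1 q1 p q :: ennreal
    and s :: real
  assumes space: "space \<mu> = UNIV"
    and borel: "sets \<mu> = sets borel"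
    and balls: "\<And>\<xi> r. r > 0 \<Longrightarrow> 0 < emeasure \<mu> (ball \<xi> r) \<and> emeasure \<mu> (ball \<xi> r) < \<infinity>"
    and doubling: "\<exists>c::real. \<forall>\<xi> r. r > 0 \<longrightarrow>
                      emeasure \<mu> (ball \<xi> (2 * r)) \<le> ennreal c * emeasure \<mu> (ball \<xi> r)"
    and filling: "hyperbolic_filling Xs"
    and s0: "0 < s0" and s1: "0 < s1"
    and p0: "0 < p0" and q0: "0 < q0" and p1: "0 < p1" and q1: "0 < q1"
    and \<theta>: "0 < \<theta>" "\<theta> < 1"
    and p_def: "inverse p = ennreal (1 - \<theta>) * inverse p0 + ennreal \<theta> * inverse p1"
    and q_def: "inverse q = ennreal (1 - \<theta>) * inverse q0 + ennreal \<theta> * inverse q1"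
    and s_def: "s = (1 - \<theta>) * s0 + \<theta> * s1"
  shows "calderon_space Xs (I_qnorm \<mu> Xs s0 p0 q0) (I_qnorm \<mu> Xs s1 p1 q1) \<theta> = I_space \<mu> Xs s p q
       \<and> (\<exists>C::real. C > 0 \<and> (\<forall>u \<in> hf_funs Xs.
            calderon_qnorm Xs (I_qnorm \<mu> Xs s0 p0 q0) (I_qnorm \<mu> Xs s1 p1 q1) \<theta> u
               \<le> ennreal C * I_qnorm \<mu> Xs s p q u
          \<and> I_qnorm \<mu> Xs s p q u
               \<le> ennreal C * calderon_qnorm Xs (I_qnorm \<mu> Xs s0 p0 q0) (I_qnorm \<mu> Xs s1 p1 q1) \<theta> u))"
proof -
  obtain c where dbl_c: "\<forall>\<xi> r. r > 0 \<longrightarrow> emeasure \<mu> (ball \<xi> (2 * r)) \<le> ennreal c * emeasure \<mu> (ball \<xi> r)"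
    using doubling by blast
  have c0: "0 \<le> c"
  proof (rule ccontr)
    assume "\<not> 0 \<le> c"
    then have "ennreal c = 0" by (simp add: ennreal_eq_0_iff)
    moreover have "emeasure \<mu> (ball undefined (2 * 1)) \<le> ennreal c * emeasure \<mu> (ball undefined 1)"
      using dbl_c[rule_format, of 1 undefined] by simp
    ultimately have "emeasure \<mu> (ball undefined (2 * 1)) \<le> 0" by simp
    then show False using balls[of 2 undefined] by simp
  qed
  interpret hfd \<mu> c Xs
  proof unfold_locales
    show "sets \<mu> = sets borel" by (rule borel)
    show "\<And>\<xi> r. 0 < r \<Longrightarrow> 0 < emeasure \<mu> (ball \<xi> r)" using balls by blast
    show "\<And>\<xi> r. 0 < r \<Longrightarrow> emeasure \<mu> (ball \<xi> r) < top" using balls by simp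
    show "0 \<le> c" by (rule c0)
    show "\<And>\<xi> r. 0 < r \<Longrightarrow> emeasure \<mu> (ball \<xi> (2 * r)) \<le> ennreal c * emeasure \<mu> (ball \<xi> r)"
      using dbl_c by blast
    show "hyperbolic_filling Xs" by (rule filling)
  qed
  define K where "K = max 1 (c ^ 4)"
  have K1: "1 \<le> K" by (simp add: K_def)
  note pe = exps[OF \<theta> p0 p1 p_def]
  note qe = exps[OF \<theta> q0 q1 q_def]
  define N0 where "N0 = I_qnorm \<mu> Xs s0 p0 q0"
  define N1 where "N1 = I_qnorm \<mu> Xs s1 p1 q1"
  have D1: "I_qnorm \<mu> Xs s p q u \<le> calderon_qnorm Xs N0 N1 \<theta> u" for u
    unfolding calderon_qnorm_def
  proof (rule Inf_greatest)
    fix x assume "x \<in> {ennreal c |c. 0 < c \<and> (\<exists>g h. g \<in> hf_funs Xs \<and> h \<in> hf_funs Xs \<and> N0 g \<le> 1 \<and> N1 h \<le> 1 \<and>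
           (\<forall>x\<in>hf_vertices Xs. norm (u x) \<le> c * norm (g x) powr (1 - \<theta>) * norm (h x) powr \<theta>))}"
    then obtain c1 g h where x: "x = ennreal c1" and c1: "0 < c1" and Ng: "N0 g \<le> 1" and Nh: "N1 h \<le> 1"
      and ineq: "\<forall>x\<in>hf_vertices Xs. norm (u x) \<le> c1 * norm (g x) powr (1 - \<theta>) * norm (h x) powr \<theta>"
      by blast
    show "I_qnorm \<mu> Xs s p q u \<le> x"
      unfolding x
      by (rule dir1[OF \<theta> p0 q0 p1 q1 p_def q_def s_def _ Ng[unfolded N0_def] Nh[unfolded N1_def] ineq])
        (use c1 in simp)
  qed
  have D2: "calderon_qnorm Xs N0 N1 \<theta> u \<le> ennreal K * I_qnorm \<mu> Xs s p q u" for u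
  proof (cases "I_qnorm \<mu> Xs s p q u = top")
    case True
    then show ?thesis using K1 by (simp add: ennreal_mult_top)
  next
    case ntop: False
    show ?thesis
    proof (cases "I_qnorm \<mu> Xs s p q u = 0")
      case True
      have "calderon_qnorm Xs N0 N1 \<theta> u \<le> 0"
      proof (rule ennreal_le_epsilon)
        fix e :: real assume "0 < e"
        then show "calderon_qnorm Xs N0 N1 \<theta> u \<le> 0 + ennreal e"
          using dir2_zero[OF pe(1) qe(1) True \<open>0 < e\<close>, of N0 N1 \<theta>]
          by (simp add: N0_def N1_def I_zero)
      qed
      then show ?thesis by simp
    next
      case False
      obtain \<Lambda> where L: "I_qnorm \<mu> Xs s p q u = ennreal \<Lambda>" "0 < \<Lambda>"
        using ntop False by (cases "I_qnorm \<mu> Xs s p q u") (auto simp: ennreal_eq_0_iff)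
      have "calderon_qnorm Xs N0 N1 \<theta> u \<le> ennreal (K * \<Lambda>)"
        unfolding N0_def N1_def K_def by (rule dir2[OF \<theta> p0 q0 p1 q1 p_def q_def s_def L])
      then show ?thesis using K1 L by (simp add: ennreal_mult)
    qed
  qed
  have D3: "I_qnorm \<mu> Xs s p q u \<le> ennreal K * calderon_qnorm Xs N0 N1 \<theta> u" for u
  proof -
    have "calderon_qnorm Xs N0 N1 \<theta> u = 1 * calderon_qnorm Xs N0 N1 \<theta> u" by simp
    also have "\<dots> \<le> ennreal K * calderon_qnorm Xs N0 N1 \<theta> u"
      using K1 by (intro mult_right_mono) (auto simp: ennreal_1[symmetric] simp del: ennreal_1)
    finally show ?thesis using D1[of u] by simp
  qed
  have eq: "calderon_space Xs N0 N1 \<theta> = I_space \<mu> Xs s p q"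
  proof (intro equalityI subsetI)
    fix u assume "u \<in> calderon_space Xs N0 N1 \<theta>"
    then have u: "u \<in> hf_funs Xs" "calderon_qnorm Xs N0 N1 \<theta> u < top" by (auto simp: calderon_space_def)
    then have "I_qnorm \<mu> Xs s p q u < top" using D1[of u] by (rule_tac le_less_trans) auto
    then show "u \<in> I_space \<mu> Xs s p q" using u by (simp add: I_space_def)
  next
    fix u assume "u \<in> I_space \<mu> Xs s p q"
    then have u: "u \<in> hf_funs Xs" "I_qnorm \<mu> Xs s p q u < top" by (auto simp: I_space_def)
    have "ennreal K * I_qnorm \<mu> Xs s p q u < top" using u(2) by (simp add: ennreal_mult_less_top)
    then have "calderon_qnorm Xs N0 N1 \<theta> u < top" using D2[of u] by (rule_tac le_less_trans) auto
    then show "u \<in> calderon_space Xs N0 N1 \<theta>" using u by (simp add: calderon_space_def)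
  qed
  show ?thesis
    unfolding N0_def[symmetric] N1_def[symmetric]
    using eq D2 D3 K1 by (intro conjI exI[of _ K]) auto
qed

end
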